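(* There exists $\gamma_0>0$ such that for all $0<\varepsilon,\gamma\le\gamma_0$ there exists $\eta_0>0$ such that for every $0<\eta\le\eta_0$ there exists $n_0$ such that for all $n\ge n_0$: if $H$ is a $3$-graph of order $n$ with $|\tilde N_{1,\gamma\varepsilon}(v)|\ge(1/4-3\gamma)n$ for every $v\in V(H)$, then there is a partition $\{V_1,\dots,V_d\}$ of $V(H)$ with $d\le4$ such that each $V_i$ is $(16,\eta)$-closed in $H$ and $|V_i|\ge(1/4-4\gamma)n$.
   Context: $K_4^-$ is the $3$-graph with $4$ vertices and $3$ edges. For $c\in\mathbb N$, a set $S$ is an $(x,y)$-connector of length $c$ if $S\cap\{x,y\}=\emptyset$, $|S|=4c-1$, and both $H[S\cup\{x\}]$, $H[S\cup\{y\}]$ contain $K_4^-$-factors (vertex-disjoint copies covering all vertices). $x,y$ are $(c,\eta)$-close if there are at least $\eta n^{4c-1}$ $(x,y)$-connectors of length $c$ in $H$. $\tilde N_{c,\eta}(x)$ is the set of vertices $(c,\eta)$-close to $x$. A set $U\subseteq V(H)$ is $(c,\eta)$-closed in $H$ if every two vertices of $U$ are $(c,\eta)$-close in $H$. *)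

theory Defs
  imports Complex_Main "HOL-Library.Disjoint_Sets"
begin

definition is_3graph :: "'a set \<Rightarrow> 'a set set \<Rightarrow> bool" where
  "is_3graph V E \<longleftrightarrow> finite V \<and> (\<forall>e\<in>E. e \<subseteq> V \<and> card e = 3)"

definition spans_K4m :: "'a set set \<Rightarrow> 'a set \<Rightarrow> bool" where
  "spans_K4m E Q \<longleftrightarrow> card Q = 4 \<and> card {e\<in>E. e \<subseteq> Q} \<ge> 3"

definition has_K4m_factor :: "'a set set \<Rightarrow> 'a set \<Rightarrow> bool" where
  "has_K4m_factor E S \<longleftrightarrow> (\<exists>P. partition_on S P \<and> (\<forall>Q\<in>P. spans_K4m E Q))"

definition connector :: "'a set \<Rightarrow> 'a set set \<Rightarrow> nat \<Rightarrow> 'a \<Rightarrow> 'a \<Rightarrow> 'a set \<Rightarrow> bool" where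
  "connector V E c x y S \<longleftrightarrow> S \<subseteq> V \<and> x \<notin> S \<and> y \<notin> S \<and> card S = 4 * c - 1
     \<and> has_K4m_factor E (insert x S) \<and> has_K4m_factor E (insert y S)"

definition close :: "'a set \<Rightarrow> 'a set set \<Rightarrow> nat \<Rightarrow> real \<Rightarrow> 'a \<Rightarrow> 'a \<Rightarrow> bool" where
  "close V E c \<eta> x y \<longleftrightarrow>
     real (card {S. connector V E c x y S}) \<ge> \<eta> * real (card V) ^ (4 * c - 1)"

definition closeN :: "'a set \<Rightarrow> 'a set set \<Rightarrow> nat \<Rightarrow> real \<Rightarrow> 'a \<Rightarrow> 'a set" where
  "closeN V E c \<eta> x = {y \<in> V. close V E c \<eta> x y}"

definition closed_set :: "'a set \<Rightarrow> 'a set set \<Rightarrow> nat \<Rightarrow> real \<Rightarrow> 'a set \<Rightarrow> bool" where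
  "closed_set V E c \<eta> U \<longleftrightarrow> (\<forall>x\<in>U. \<forall>y\<in>U. x \<noteq> y \<longrightarrow> close V E c \<eta> x y)"

end

theory Submission
  imports Defs
begin


lemma close_mono: "close V E c b x y \<Longrightarrow> b' \<le> b \<Longrightarrow> close V E c b' x y"
  unfolding close_def by (smt (verit) mult_right_mono zero_le_power of_nat_0_le_iff)

lemma close_sym: "close V E c b x y = close V E c b y x"
proof -
  have "{S. connector V E c x y S} = {S. connector V E c y x S}" by (auto simp: connector_def)
  thus ?thesis unfolding close_def by simp
qed

lemma factor_union:
  assumes "has_K4m_factor E A" "has_K4m_factor E B" "A \<inter> B = {}"
  shows "has_K4m_factor E (A \<union> B)"
proof -
  obtain P where P: "partition_on A P" "\<forall>Q\<in>P. spans_K4m E Q" using assms(1) unfolding has_K4m_factor_def by blast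
  obtain R where R: "partition_on B R" "\<forall>Q\<in>R. spans_K4m E Q" using assms(2) unfolding has_K4m_factor_def by blast
  have "partition_on (A \<union> B) (P \<union> R)"
  proof (rule partition_onI)
    show "\<Union>(P \<union> R) = A \<union> B" using P R by (auto simp: partition_on_def)
    show "{} \<notin> P \<union> R" using P R by (auto simp: partition_on_def)
    fix p q assume "p \<in> P \<union> R" "q \<in> P \<union> R" "p \<noteq> q"
    then show "disjnt p q" proof -
      have dP: "disjoint P" and dR: "disjoint R" using P(1) R(1) by (auto dest: partition_onD2)
      have sP: "\<And>u. u \<in> P \<Longrightarrow> u \<subseteq> A" using P(1) by (auto dest: partition_onD1)
      have sR: "\<And>u. u \<in> R \<Longrightarrow> u \<subseteq> B" using R(1) by (auto dest: partition_onD1)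
      show "disjnt p q"
      proof (cases "p \<in> P")
        case pP: True show ?thesis
        proof (cases "q \<in> P")
          case True thus ?thesis using pP dP \<open>p \<noteq> q\<close> by (simp add: pairwise_def)
        next
          case False hence "q \<in> R" using \<open>q \<in> P \<union> R\<close> by simp
          thus ?thesis using sP[OF pP] sR assms(3) by (auto simp: disjnt_def)
        qed
      next
        case pR: False hence pR: "p \<in> R" using \<open>p \<in> P \<union> R\<close> by simp
        show ?thesis
        proof (cases "q \<in> R")
          case True thus ?thesis using pR dR \<open>p \<noteq> q\<close> by (simp add: pairwise_def)
        next
          case False hence "q \<in> P" using \<open>q \<in> P \<union> R\<close> by simp
          thus ?thesis using sR[OF pR] sP assms(3) by (auto simp: disjnt_def)
        qed
      qed
    qed
  qed
  thus ?thesis using P R unfolding has_K4m_factor_def by blast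
qed

lemma card_fiber_bound:
  assumes "finite X" "f ` X \<subseteq> Y" "finite Y" "\<And>y. y \<in> Y \<Longrightarrow> card {x\<in>X. f x = y} \<le> m"
  shows "card X \<le> card Y * m"
proof -
  have "X = (\<Union>y\<in>Y. {x\<in>X. f x = y})" using assms(2) by auto
  hence "card X \<le> (\<Sum>y\<in>Y. card {x\<in>X. f x = y})" using card_UN_le[OF assms(3)] by metis
  also have "\<dots> \<le> (\<Sum>y\<in>Y. m)" by (rule sum_mono) (use assms(4) in auto)
  finally show ?thesis by simp
qed

lemma card_ksubsets_le: "finite V \<Longrightarrow> card {S. S \<subseteq> V \<and> card S = p} \<le> card V ^ p"
proof -
  assume f: "finite V"
  show ?thesis
  proof (cases "p \<le> card V")
    case True thus ?thesis using n_subsets[OF f, of p] binomial_le_pow[OF True] by simp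
  next
    case False thus ?thesis using n_subsets[OF f, of p] binomial_eq_0[of "card V" p] by simp
  qed
qed

lemma card_ksubsets_mem_le:
  assumes "finite V" "p \<ge> 1"
  shows "card {S. S \<subseteq> V \<and> card S = p \<and> w \<in> S} \<le> card V ^ (p - 1)"
proof -
  have "card {S. S \<subseteq> V \<and> card S = p \<and> w \<in> S} \<le> card {S. S \<subseteq> V \<and> card S = p - 1}"
  proof (rule card_inj_on_le[where f = "\<lambda>S. S - {w}"])
    show "inj_on (\<lambda>S. S - {w}) {S. S \<subseteq> V \<and> card S = p \<and> w \<in> S}"
      by (rule inj_onI) (metis (no_types, lifting) insert_Diff mem_Collect_eq)
    show "(\<lambda>S. S - {w}) ` {S. S \<subseteq> V \<and> card S = p \<and> w \<in> S} \<subseteq> {S. S \<subseteq> V \<and> card S = p - 1}"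
      using assms(1) by (auto intro: finite_subset)
    show "finite {S. S \<subseteq> V \<and> card S = p - 1}" using assms(1) by simp
  qed
  also have "\<dots> \<le> card V ^ (p - 1)" by (rule card_ksubsets_le[OF assms(1)])
  finally show ?thesis .
qed


lemma conn_finite: "finite V \<Longrightarrow> finite {S. connector V E c x y S}"
  by (rule finite_subset[of _ "Pow V"]) (auto simp: connector_def)

lemma join_conn:
  assumes "connector V E a x z S1" "connector V E b z y S2" "z \<in> V" "x \<noteq> z" "y \<noteq> z"
    "S1 \<inter> S2 = {}" "y \<notin> S1" "x \<notin> S2" "a \<ge> 1" "b \<ge> 1"
  shows "connector V E (a+b) x y (S1 \<union> insert z S2)"
proof -
  have c1: "S1 \<subseteq> V" "x \<notin> S1" "z \<notin> S1" "card S1 = 4*a-1" "has_K4m_factor E (insert x S1)" "has_K4m_factor E (insert z S1)"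
    using assms(1) unfolding connector_def by auto
  have c2: "S2 \<subseteq> V" "z \<notin> S2" "y \<notin> S2" "card S2 = 4*b-1" "has_K4m_factor E (insert z S2)" "has_K4m_factor E (insert y S2)"
    using assms(2) unfolding connector_def by auto
  have f1: "finite S1" using c1(4) assms(9) by (intro card_ge_0_finite) simp
  have f2: "finite S2" using c2(4) assms(10) by (intro card_ge_0_finite) simp
  have "card (S1 \<union> insert z S2) = card S1 + card (insert z S2)"
    using f1 f2 assms(6) c1(3) by (intro card_Un_disjoint) auto
  also have "\<dots> = 4*(a+b) - 1" using c1(4) c2(4) c2(2) f2 assms(9,10) by simp
  finally have card: "card (S1 \<union> insert z S2) = 4*(a+b) - 1" .
  have "has_K4m_factor E (insert x S1 \<union> insert z S2)"
    using c1(5) c2(5) assms(4,6,8) c1(3) by (intro factor_union) auto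
  moreover have "insert x (S1 \<union> insert z S2) = insert x S1 \<union> insert z S2" by auto
  moreover have "has_K4m_factor E (insert z S1 \<union> insert y S2)"
    using c1(6) c2(6) assms(5,6,7) c2(2) by (intro factor_union) auto
  moreover have "insert y (S1 \<union> insert z S2) = insert z S1 \<union> insert y S2" by auto
  ultimately show ?thesis unfolding connector_def
  proof (intro conjI)
    show "S1 \<union> insert z S2 \<subseteq> V" using c1(1) c2(1) assms(3) by blast
    show "x \<notin> S1 \<union> insert z S2" using c1(2) assms(4,8) by blast
    show "y \<notin> S1 \<union> insert z S2" using c2(3) assms(5,7) by blast
  qed (use card in simp_all)
qed




lemma fiber_small:
  assumes "card T = k" "k \<le> 63" "finite T"
  shows "card {u\<in>X. (case u of (z, P) \<Rightarrow> fst P \<union> insert z (snd P)) = T} \<le> 4^66"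
proof -
  have sub: "{u\<in>X. (case u of (z, P) \<Rightarrow> fst P \<union> insert z (snd P)) = T} \<subseteq> T \<times> (Pow T \<times> Pow T)"
    by auto
  have "card {u\<in>X. (case u of (z, P) \<Rightarrow> fst P \<union> insert z (snd P)) = T} \<le> card (T \<times> (Pow T \<times> Pow T))"
    using assms(3) by (intro card_mono[OF _ sub]) auto
  also have "\<dots> = k * (2^k * 2^k)" using assms by (simp add: card_cartesian_product card_Pow)
  also have "\<dots> = k * 4^k" by (simp add: power_mult_distrib[symmetric])
  also have "\<dots> \<le> 64 * 4^63"
  proof (rule mult_mono)
    show "(4::nat)^k \<le> 4^63" using assms(2) by (intro power_increasing) auto
  qed (use assms(2) in auto)
  also have "\<dots> = (4::nat)^66" by simp
  finally show ?thesis .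
qed

lemma compose:
  fixes a b :: nat and b1 b2 zeta :: real
  assumes fin: "finite V" and a: "a \<ge> 1" and b: "b \<ge> 1" and ab: "a + b \<le> 16"
  and Z: "Z \<subseteq> V" "x \<notin> Z" "y \<notin> Z" "real (card Z) \<ge> zeta * real (card V)"
  and c1: "\<And>z. z\<in>Z \<Longrightarrow> close V E a b1 x z" and c2: "\<And>z. z\<in>Z \<Longrightarrow> close V E b b2 z y"
  and pos: "b1 > 0" "b2 > 0" "zeta \<ge> 0" and nbig: "real (card V) * b1 * b2 \<ge> 6"
  shows "close V E (a+b) (zeta * b1 * b2 / 4^67) x y"
proof -
  define n where "n = card V"
  define p where "p = 4*a - 1"
  define q where "q = 4*b - 1"
  have p3: "p \<ge> 3" and q3: "q \<ge> 3" using a b by (auto simp: p_def q_def)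
  have npos: "real n > 0"
  proof (rule ccontr)
    assume "\<not> real n > 0" hence "n = 0" by simp
    thus False using nbig by (simp add: n_def)
  qed
  define C1 where "C1 z = {S. connector V E a x z S}" for z
  define C2 where "C2 z = {S. connector V E b z y S}" for z
  define G where "G z = {P \<in> C1 z \<times> C2 z. fst P \<inter> snd P = {} \<and> y \<notin> fst P \<and> x \<notin> snd P}" for z
  define Sk where "Sk k = {S. S \<subseteq> V \<and> card S = k}" for k
  define Sw where "Sw k w = {S. S \<subseteq> V \<and> card S = k \<and> w \<in> S}" for k w
  define Bd where "Bd = (\<Union>w\<in>V. Sw p w \<times> Sw q w) \<union> (Sw p y \<times> Sk q) \<union> (Sk p \<times> Sw q x)"
  have finSk: "finite (Sk k)" for k using fin unfolding Sk_def by simp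
  have finSw: "finite (Sw k w)" for k w
    by (rule finite_subset[OF _ finSk[of k]]) (auto simp: Sw_def Sk_def)
  have cSk: "card (Sk k) \<le> n ^ k" for k unfolding Sk_def n_def using card_ksubsets_le[OF fin] .
  have cSw: "card (Sw k w) \<le> n ^ (k - 1)" if "k \<ge> 1" for k w
    unfolding Sw_def n_def using card_ksubsets_mem_le[OF fin that] .
  have finBd: "finite Bd" unfolding Bd_def using fin finSw finSk by auto
  have cardBd: "card Bd \<le> 3 * n ^ (p+q-1)"
  proof -
    have e1: "n * (n^(p-1) * n^(q-1)) = n^(p+q-1)"
    proof -
      have "n * (n^(p-1) * n^(q-1)) = n^(1 + (p-1) + (q-1))" by (simp add: power_add)
      also have "1 + (p-1) + (q-1) = p+q-1" using p3 q3 by simp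
      finally show ?thesis .
    qed
    have e2: "n^(p-1) * n^q = n^(p+q-1)" using p3 q3 by (simp add: power_add[symmetric])
    have e3: "n^p * n^(q-1) = n^(p+q-1)" using p3 q3 by (simp add: power_add[symmetric])
    have "card (\<Union>w\<in>V. Sw p w \<times> Sw q w) \<le> (\<Sum>w\<in>V. card (Sw p w \<times> Sw q w))"
      by (rule card_UN_le[OF fin])
    also have "\<dots> \<le> (\<Sum>w\<in>V. n^(p-1) * n^(q-1))"
      using cSw p3 q3 by (intro sum_mono) (simp add: card_cartesian_product mult_mono)
    also have "\<dots> = n^(p+q-1)" using e1 by (simp add: n_def)
    finally have u1: "card (\<Union>w\<in>V. Sw p w \<times> Sw q w) \<le> n^(p+q-1)" .
    have u2: "card (Sw p y \<times> Sk q) \<le> n^(p+q-1)"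
      using cSw[of p y] cSk[of q] p3 e2 by (simp add: card_cartesian_product) (metis mult_le_mono)
    have u3: "card (Sk p \<times> Sw q x) \<le> n^(p+q-1)"
      using cSw[of q x] cSk[of p] q3 e3 by (simp add: card_cartesian_product) (metis mult_le_mono)
    have "card Bd \<le> card (\<Union>w\<in>V. Sw p w \<times> Sw q w) + card (Sw p y \<times> Sk q) + card (Sk p \<times> Sw q x)"
      unfolding Bd_def by (meson card_Un_le add_le_mono le_trans order_refl)
    thus ?thesis using u1 u2 u3 by linarith
  qed
  have C1sub: "C1 z \<subseteq> Sk p" for z unfolding C1_def Sk_def p_def connector_def by auto
  have C2sub: "C2 z \<subseteq> Sk q" for z unfolding C2_def Sk_def q_def connector_def by auto
  have cover: "C1 z \<times> C2 z \<subseteq> G z \<union> Bd" for z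
  proof
    fix P assume P: "P \<in> C1 z \<times> C2 z"
    obtain S1 S2 where P12: "P = (S1, S2)" by (cases P)
    have S1: "S1 \<in> Sk p" and S2: "S2 \<in> Sk q" using P P12 C1sub C2sub by auto
    show "P \<in> G z \<union> Bd"
    proof (cases "S1 \<inter> S2 = {} \<and> y \<notin> S1 \<and> x \<notin> S2")
      case True thus ?thesis using P P12 unfolding G_def by auto
    next
      case False
      then consider w where "w \<in> S1" "w \<in> S2" | "y \<in> S1" | "x \<in> S2" by blast
      thus ?thesis
      proof cases
        case 1
        hence "w \<in> V" using S1 by (auto simp: Sk_def)
        moreover have "(S1, S2) \<in> Sw p w \<times> Sw q w" using 1 S1 S2 by (auto simp: Sk_def Sw_def)
        ultimately show ?thesis unfolding Bd_def P12 by blast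
      next
        case 2 thus ?thesis using S1 S2 unfolding Bd_def P12 by (auto simp: Sk_def Sw_def)
      next
        case 3 thus ?thesis using S1 S2 unfolding Bd_def P12 by (auto simp: Sk_def Sw_def)
      qed
    qed
  qed
  have finC1: "finite (C1 z)" for z using finite_subset[OF C1sub finSk] .
  have finC2: "finite (C2 z)" for z using finite_subset[OF C2sub finSk] .
  have finG: "finite (G z)" for z
    by (rule finite_subset[of _ "C1 z \<times> C2 z"]) (auto simp: G_def finC1 finC2)
  have Gz: "real (card (G z)) \<ge> b1 * b2 / 2 * real n ^ (p+q)" if z: "z \<in> Z" for z
  proof -
    have h1: "real (card (C1 z)) \<ge> b1 * real n ^ p" using c1[OF z] unfolding close_def C1_def p_def n_def by simp
    have h2: "real (card (C2 z)) \<ge> b2 * real n ^ q" using c2[OF z] unfolding close_def C2_def q_def n_def by simp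
    have "card (C1 z) * card (C2 z) = card (C1 z \<times> C2 z)" by (simp add: card_cartesian_product)
    also have "\<dots> \<le> card (G z \<union> Bd)" by (rule card_mono) (use finG finBd cover in auto)
    also have "\<dots> \<le> card (G z) + card Bd" by (rule card_Un_le)
    finally have "real (card (C1 z)) * real (card (C2 z)) \<le> real (card (G z)) + real (card Bd)"
      by (metis of_nat_add of_nat_le_iff of_nat_mult)
    moreover have "real (card (C1 z)) * real (card (C2 z)) \<ge> (b1 * real n ^ p) * (b2 * real n ^ q)"
      using h1 h2 pos by (intro mult_mono) auto
    moreover have "real (card Bd) \<le> 3 * real n ^ (p+q-1)"
      using cardBd by (metis of_nat_le_iff of_nat_mult of_nat_numeral of_nat_power)
    moreover have "3 * real n ^ (p+q-1) \<le> b1 * b2 / 2 * real n ^ (p+q)"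
    proof -
      have pq: "p+q = Suc (p+q-1)" using p3 by simp
      have eq: "real n ^ (p+q) = real n * real n ^ (p+q-1)" by (subst pq) (simp only: power_Suc)
      have "3 \<le> b1 * b2 / 2 * real n" using nbig by (simp add: n_def algebra_simps)
      hence "3 * real n ^ (p+q-1) \<le> (b1 * b2 / 2 * real n) * real n ^ (p+q-1)"
        by (intro mult_right_mono) auto
      thus ?thesis unfolding eq by (simp add: algebra_simps)
    qed
    moreover have "(b1 * real n ^ p) * (b2 * real n ^ q) = b1 * b2 * real n ^ (p+q)"
      by (simp add: power_add algebra_simps)
    moreover have "b1 * b2 / 2 * real n ^ (p + q) = (b1 * b2 * real n ^ (p + q)) / 2" by simp
    ultimately show ?thesis by linarith
  qed
  define X where "X = Sigma Z G"
  have finZ: "finite Z" using finite_subset[OF Z(1) fin] .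
  have finX: "finite X" unfolding X_def using finZ finG by auto
  have cX: "card X = (\<Sum>z\<in>Z. card (G z))" unfolding X_def using finZ finG by (simp add: card_SigmaI)
  have X_lb: "real (card X) \<ge> zeta * b1 * b2 / 2 * real n ^ (p+q+1)"
  proof -
    have "real (card X) = (\<Sum>z\<in>Z. real (card (G z)))" using cX by simp
    also have "\<dots> \<ge> (\<Sum>z\<in>Z. b1 * b2 / 2 * real n ^ (p+q))" by (rule sum_mono) (use Gz in auto)
    finally have "real (card X) \<ge> real (card Z) * (b1 * b2 / 2 * real n ^ (p+q))" by simp
    moreover have "real (card Z) * (b1 * b2 / 2 * real n ^ (p+q)) \<ge> (zeta * real n) * (b1 * b2 / 2 * real n ^ (p+q))"
      using Z(4) pos by (intro mult_right_mono) (auto simp: n_def)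
    ultimately show ?thesis by (simp add: algebra_simps)
  qed
  define Y where "Y = {T. connector V E (a+b) x y T}"
  define f :: "'a \<times> 'a set \<times> 'a set \<Rightarrow> 'a set" where "f = (\<lambda>u. case u of (z, P) \<Rightarrow> fst P \<union> insert z (snd P))"
  have finY: "finite Y" unfolding Y_def using conn_finite[OF fin] .
  have fXY: "f ` X \<subseteq> Y"
  proof
    fix T assume "T \<in> f ` X"
    then obtain z S1 S2 where zS: "z \<in> Z" "(S1, S2) \<in> G z" "T = S1 \<union> insert z S2"
      unfolding X_def f_def by auto
    show "T \<in> Y" unfolding Y_def zS(3) mem_Collect_eq
      by (rule join_conn) (use zS Z a b in \<open>auto simp: G_def C1_def C2_def\<close>)
  qed
  have fib: "card {u\<in>X. f u = T} \<le> 4^66" if "T \<in> Y" for T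
  proof -
    have "card T = 4*(a+b) - 1" using that unfolding Y_def connector_def by auto
    moreover have "finite T" using that fin unfolding Y_def connector_def by (auto intro: finite_subset)
    ultimately show ?thesis unfolding f_def using ab by (intro fiber_small) auto
  qed
  have "card X \<le> card Y * 4^66" by (rule card_fiber_bound[OF finX fXY finY fib])
  hence "real (card X) \<le> real (card Y) * 4^66" by (metis of_nat_le_iff of_nat_mult of_nat_numeral of_nat_power)
  define Q where "Q = zeta * b1 * b2 * real n ^ (p+q+1)"
  have "Q / 2 \<le> real (card Y) * 4^66" using X_lb \<open>real (card X) \<le> real (card Y) * 4^66\<close> unfolding Q_def by simp
  hence "Q \<le> real (card Y) * (2 * 4^66)" by linarith
  moreover have "real (card Y) * (2 * 4^66) \<le> real (card Y) * 4^67" by (intro mult_left_mono) auto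
  ultimately have "Q \<le> real (card Y) * 4^67" by linarith
  hence "Q / 4^67 \<le> real (card Y)" by (simp add: pos_divide_le_eq)
  moreover have "p + q + 1 = 4 * (a+b) - 1" using a b by (simp add: p_def q_def)
  moreover have "zeta * b1 * b2 / 4^67 * real n ^ (p+q+1) = Q / 4^67" unfolding Q_def by simp
  ultimately show ?thesis unfolding close_def Y_def n_def by simp
qed




lemma self_close:
  assumes fin: "finite V" and c: "close V E 1 b v w"
  shows "close V E 1 b v v"
proof -
  have "{S. connector V E 1 v w S} \<subseteq> {S. connector V E 1 v v S}" by (auto simp: connector_def)
  hence "card {S. connector V E 1 v w S} \<le> card {S. connector V E 1 v v S}"
    using conn_finite[OF fin] by (rule card_mono[rotated])
  thus ?thesis using c unfolding close_def by (meson of_nat_le_iff order_trans)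
qed

definition Kset :: "'a set \<Rightarrow> 'a set set \<Rightarrow> 'a set set" where
  "Kset V E = {Q. Q \<subseteq> V \<and> card Q = 4 \<and> has_K4m_factor E Q}"

lemma K_count:
  assumes fin: "finite V" and nb: "\<And>v. v \<in> V \<Longrightarrow> \<exists>w. close V E 1 b v w" and b: "b \<ge> 0"
  shows "real (card (Kset V E)) \<ge> b / 64 * real (card V) ^ 4"
proof -
  define n where "n = card V"
  define W where "W v = (SOME w. close V E 1 b v w)" for v
  have W: "close V E 1 b v (W v)" if "v \<in> V" for v unfolding W_def using nb[OF that] by (rule someI_ex)
  define C where "C v = {S. connector V E 1 v (W v) S}" for v
  have finC: "finite (C v)" for v unfolding C_def using conn_finite[OF fin] .
  define X where "X = Sigma V C"
  have finX: "finite X" unfolding X_def using fin finC by auto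
  have "real (card X) = (\<Sum>v\<in>V. real (card (C v)))" unfolding X_def using fin finC by (simp add: card_SigmaI)
  also have "\<dots> \<ge> (\<Sum>v\<in>V. b * real n ^ 3)"
    by (rule sum_mono) (use W in \<open>auto simp: close_def C_def n_def\<close>)
  finally have Xl: "real (card X) \<ge> real n * (b * real n ^ 3)" by (simp add: n_def)
  define f :: "'a \<times> 'a set \<Rightarrow> 'a set" where "f = (\<lambda>(v, S). insert v S)"
  have finK: "finite (Kset V E)" unfolding Kset_def using fin by (auto intro: finite_subset[of _ "Pow V"])
  have fXK: "f ` X \<subseteq> Kset V E"
  proof
    fix T assume "T \<in> f ` X"
    then obtain v S where vS: "v \<in> V" "S \<in> C v" "T = insert v S" unfolding X_def f_def by auto
    have S: "S \<subseteq> V" "v \<notin> S" "card S = 3" "has_K4m_factor E (insert v S)"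
      using vS(2) unfolding C_def connector_def by auto
    have "finite S" using S(3) by (intro card_ge_0_finite) simp
    thus "T \<in> Kset V E" unfolding Kset_def vS(3) using S vS(1) by auto
  qed
  have fib: "card {u\<in>X. f u = T} \<le> 64" if "T \<in> Kset V E" for T
  proof -
    have T: "card T = 4" "finite T" using that unfolding Kset_def by (auto intro: card_ge_0_finite)
    have "{u\<in>X. f u = T} \<subseteq> T \<times> Pow T" unfolding f_def by auto
    hence "card {u\<in>X. f u = T} \<le> card (T \<times> Pow T)" using T by (intro card_mono) auto
    also have "\<dots> = 64" using T by (simp add: card_cartesian_product card_Pow)
    finally show ?thesis .
  qed
  have "card X \<le> card (Kset V E) * 64" by (rule card_fiber_bound[OF finX fXK finK fib])
  hence "real (card X) \<le> real (card (Kset V E)) * 64" by (metis of_nat_le_iff of_nat_mult of_nat_numeral)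
  moreover have "real n * (b * real n ^ 3) = b * real n ^ 4" by (simp add: power_Suc algebra_simps numeral_eq_Suc)
  ultimately show ?thesis using Xl unfolding n_def by linarith
qed

lemma pad:
  fixes L :: nat and b k :: real
  assumes fin: "finite V" and L: "L \<ge> 1" "L + 1 \<le> 16"
  and K: "real (card (Kset V E)) \<ge> k * real (card V) ^ 4"
  and c: "close V E L b x y" and pos: "b \<ge> 0" "k > 0" and nbig: "real (card V) * k \<ge> 130"
  shows "close V E (L+1) (b * k / 4^68) x y"
proof -
  define n where "n = card V"
  define p where "p = 4*L - 1"
  have p3: "p \<ge> 3" using L by (simp add: p_def)
  define C where "C = {S. connector V E L x y S}"
  define Sw where "Sw w = {S. S \<subseteq> V \<and> card S = 4 \<and> w \<in> S}" for w
  define G where "G S = {Q \<in> Kset V E. Q \<inter> insert x (insert y S) = {}}" for S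
  have finC: "finite C" unfolding C_def using conn_finite[OF fin] .
  have finK: "finite (Kset V E)" unfolding Kset_def using fin by (auto intro: finite_subset[of _ "Pow V"])
  have finG: "finite (G S)" for S unfolding G_def using finK by auto
  have cSw: "card (Sw w) \<le> n ^ 3" for w
    unfolding Sw_def n_def using card_ksubsets_mem_le[OF fin, of 4 w] by simp
  have finSw: "finite (Sw w)" for w unfolding Sw_def using fin by (auto intro: finite_subset[of _ "Pow V"])
  have Gl: "real (card (G S)) \<ge> k / 2 * real n ^ 4" if S: "S \<in> C" for S
  proof -
    define W where "W = insert x (insert y S)"
    have cS: "card S = p" "finite S" using S unfolding C_def connector_def p_def using p3 L
      by (auto intro: card_ge_0_finite)
    have cW1: "card (insert y S) \<le> Suc (card S)" using cS(2) by (simp add: card_insert_if)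
    have cW2: "card (insert x (insert y S)) \<le> Suc (card (insert y S))" using cS(2) by (simp add: card_insert_if)
    have cW: "card W \<le> p + 2" unfolding W_def using cW1 cW2 cS(1) by simp
    have sub: "Kset V E \<subseteq> G S \<union> (\<Union>w\<in>W. Sw w)"
    proof
      fix Q assume Q: "Q \<in> Kset V E"
      show "Q \<in> G S \<union> (\<Union>w\<in>W. Sw w)"
      proof (cases "Q \<inter> W = {}")
        case True thus ?thesis using Q unfolding G_def W_def by blast
      next
        case False
        then obtain w where w: "w \<in> Q" "w \<in> W" by blast
        have "Q \<in> Sw w" using Q w(1) unfolding Sw_def Kset_def by blast
        thus ?thesis using w(2) by blast
      qed
    qed
    have finW: "finite W" using cS(2) by (simp add: W_def)
    have k1: "card (Kset V E) \<le> card (G S \<union> (\<Union>w\<in>W. Sw w))"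
      by (rule card_mono[OF _ sub]) (use finG finSw finW in blast)
    have k2: "card (G S \<union> (\<Union>w\<in>W. Sw w)) \<le> card (G S) + card (\<Union>w\<in>W. Sw w)" by (rule card_Un_le)
    have "card (\<Union>w\<in>W. Sw w) \<le> (\<Sum>w\<in>W. card (Sw w))" using finW by (rule card_UN_le)
    also have "\<dots> \<le> (\<Sum>w\<in>W. n^3)" by (rule sum_mono) (rule cSw)
    also have "\<dots> = card W * n^3" by simp
    also have "\<dots> \<le> 65 * n^3" using cW p3 L by (intro mult_right_mono) (auto simp: p_def)
    finally have k3: "card (\<Union>w\<in>W. Sw w) \<le> 65 * n^3" .
    have "card (Kset V E) \<le> card (G S) + 65 * n^3" using k1 k2 k3 by linarith
    hence "real (card (Kset V E)) \<le> real (card (G S) + 65 * n^3)" by (simp only: of_nat_le_iff)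
    hence "real (card (Kset V E)) \<le> real (card (G S)) + 65 * real n^3" by simp
    moreover have "65 * real n ^ 3 \<le> k / 2 * real n ^ 4"
    proof -
      have "65 \<le> k / 2 * real n" using nbig by (simp add: n_def algebra_simps)
      hence "65 * real n ^ 3 \<le> (k / 2 * real n) * real n ^ 3" by (intro mult_right_mono) auto
      moreover have "real n ^ 4 = real n * real n ^ 3" by (simp add: eval_nat_numeral)
      ultimately show ?thesis by (simp add: mult.assoc)
    qed
    moreover have "k / 2 * real n ^ 4 = (k * real n ^ 4) / 2" by simp
    ultimately show ?thesis using K unfolding n_def by linarith
  qed
  define X where "X = Sigma C G"
  have finX: "finite X" unfolding X_def using finC finG by auto
  have "real (card X) = (\<Sum>S\<in>C. real (card (G S)))" unfolding X_def using finC finG by (simp add: card_SigmaI)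
  also have "\<dots> \<ge> (\<Sum>S\<in>C. k / 2 * real n ^ 4)" by (rule sum_mono) (rule Gl)
  finally have "real (card X) \<ge> real (card C) * (k / 2 * real n ^ 4)" by simp
  moreover have "real (card C) \<ge> b * real n ^ p" using c unfolding close_def C_def n_def p_def by simp
  moreover have "real (card C) * (k / 2 * real n ^ 4) \<ge> (b * real n ^ p) * (k / 2 * real n ^ 4)"
    using \<open>real (card C) \<ge> b * real n ^ p\<close> pos(2) by (intro mult_right_mono) auto
  ultimately have Xl: "real (card X) \<ge> (b * real n ^ p) * (k / 2 * real n ^ 4)" by linarith
  define Y where "Y = {T. connector V E (L+1) x y T}"
  define f :: "'a set \<times> 'a set \<Rightarrow> 'a set" where "f = (\<lambda>(S, Q). S \<union> Q)"
  have finY: "finite Y" unfolding Y_def using conn_finite[OF fin] .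
  have fXY: "f ` X \<subseteq> Y"
  proof
    fix T assume "T \<in> f ` X"
    then obtain u where u: "u \<in> X" "T = f u" by blast
    obtain S Q where uSQ: "u = (S, Q)" by (cases u)
    have SQ: "S \<in> C" "Q \<in> G S" "T = S \<union> Q" using u unfolding uSQ X_def f_def by simp_all
    have S: "S \<subseteq> V" "x \<notin> S" "y \<notin> S" "card S = p" "has_K4m_factor E (insert x S)" "has_K4m_factor E (insert y S)"
      using SQ(1) unfolding C_def connector_def p_def by auto
    have Q: "Q \<subseteq> V" "card Q = 4" "has_K4m_factor E Q" "Q \<inter> insert x (insert y S) = {}"
      using SQ(2) unfolding G_def Kset_def by auto
    have fS: "finite S" using S(4) p3 by (intro card_ge_0_finite) simp
    have fQ: "finite Q" using Q(2) by (intro card_ge_0_finite) simp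
    have dSQ: "S \<inter> Q = {}" using Q(4) by blast
    have "card (S \<union> Q) = p + 4" using card_Un_disjoint[OF fS fQ dSQ] S(4) Q(2) by simp
    moreover have "p + 4 = 4 * (L+1) - 1" using L by (simp add: p_def)
    moreover have "has_K4m_factor E (insert x S \<union> Q)" using Q(4) by (intro factor_union[OF S(5) Q(3)]) blast
    moreover have "has_K4m_factor E (insert y S \<union> Q)" using Q(4) by (intro factor_union[OF S(6) Q(3)]) blast
    moreover have "insert x (S \<union> Q) = insert x S \<union> Q" "insert y (S \<union> Q) = insert y S \<union> Q" by auto
    ultimately have f4: "card (S \<union> Q) = 4 * (L+1) - 1" "has_K4m_factor E (insert x (S \<union> Q))"
      "has_K4m_factor E (insert y (S \<union> Q))" by (metis, metis, metis)
    show "T \<in> Y" unfolding Y_def SQ(3) mem_Collect_eq connector_def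
    proof (intro conjI)
      show "S \<union> Q \<subseteq> V" using S(1) Q(1) by blast
      show "x \<notin> S \<union> Q" using S(2) Q(4) by blast
      show "y \<notin> S \<union> Q" using S(3) Q(4) by blast
    qed (use f4 in simp_all)
  qed
  have fib: "card {u\<in>X. f u = T} \<le> 4^67" if "T \<in> Y" for T
  proof -
    have T: "card T = 4*(L+1) - 1" "finite T" using that fin unfolding Y_def connector_def
      by (auto intro: finite_subset)
    have "{u\<in>X. f u = T} \<subseteq> Pow T \<times> Pow T" unfolding f_def by auto
    hence "card {u\<in>X. f u = T} \<le> card (Pow T \<times> Pow T)" using T by (intro card_mono) auto
    also have "\<dots> = 2^card T * 2^card T" using T by (simp add: card_cartesian_product card_Pow)
    also have "\<dots> = 4^card T" by (simp add: power_mult_distrib[symmetric])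
    also have "\<dots> \<le> 4^67" using T L by (intro power_increasing) auto
    finally show ?thesis .
  qed
  have "card X \<le> card Y * 4^67" by (rule card_fiber_bound[OF finX fXY finY fib])
  hence cXY: "real (card X) \<le> real (card Y) * 4^67" by (metis of_nat_le_iff of_nat_mult of_nat_numeral of_nat_power)
  define Q where "Q = b * k * real n ^ (p + 4)"
  have "(b * real n ^ p) * (k / 2 * real n ^ 4) = Q / 2" unfolding Q_def by (simp add: power_add algebra_simps)
  hence "Q / 2 \<le> real (card Y) * 4^67" using Xl cXY by linarith
  hence "Q \<le> real (card Y) * (2 * 4^67)" by linarith
  moreover have "real (card Y) * (2 * 4^67) \<le> real (card Y) * 4^68" by (intro mult_left_mono) auto
  ultimately have "Q \<le> real (card Y) * 4^68" by linarith
  hence "Q / 4^68 \<le> real (card Y)" by (simp add: pos_divide_le_eq)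
  moreover have "b * k / 4^68 * real n ^ (p+4) = Q / 4^68" unfolding Q_def by simp
  ultimately have fin1: "b * k / 4^68 * real (card V) ^ (p+4) \<le> real (card Y)" by (simp add: n_def)
  have e: "4 * (L+1) - 1 = p + 4" using L by (simp add: p_def)
  show ?thesis unfolding close_def e using fin1 unfolding Y_def .
qed




primrec Aset :: "'a set \<Rightarrow> 'a set set \<Rightarrow> real \<Rightarrow> real \<Rightarrow> nat \<Rightarrow> 'a \<Rightarrow> 'a set" where
  "Aset V E b a 0 x = closeN V E 1 b x"
| "Aset V E b a (Suc j) x = Aset V E b a j x \<union>
     {y \<in> V. real (card (Aset V E b a j x \<inter> Aset V E b a j y)) \<ge> a * real (card V)}"

definition theta :: "real \<Rightarrow> real" where "theta b = b / 64 / 4^68"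

primrec bb :: "real \<Rightarrow> real \<Rightarrow> nat \<Rightarrow> real" where
  "bb b a 0 = b"
| "bb b a (Suc j) = (a/2) * bb b a j * bb b a j / 4^67 * theta b ^ 16"

definition cB :: "real \<Rightarrow> real \<Rightarrow> real" where "cB b a = (a/2) * b * bb b a 4 / 4^67"
definition cC :: "real \<Rightarrow> real \<Rightarrow> real" where "cC b a = (a/2) * b * cB b a / 4^67"

locale Hset =
  fixes V :: "'a set" and E :: "'a set set" and \<beta> \<alpha> \<gamma> :: real
  assumes fin: "finite V"
  and \<beta>: "0 < \<beta>" "\<beta> \<le> 1" and \<gamma>: "0 < \<gamma>" "\<gamma> \<le> 1/100" and \<alpha>: "\<alpha> = \<gamma> / 100"
  and deg: "\<And>v. v \<in> V \<Longrightarrow> real (card (closeN V E 1 \<beta> v)) \<ge> (1/4 - 3*\<gamma>) * real (card V)"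
  and N1: "real (card V) * (\<beta>/64) \<ge> 130"
  and N2: "\<And>j. j < 4 \<Longrightarrow> real (card V) * bb \<beta> \<alpha> j * bb \<beta> \<alpha> j \<ge> 6"
  and N3: "real (card V) * \<alpha> \<ge> 40"
  and N4: "real (card V) * \<beta> * bb \<beta> \<alpha> 4 \<ge> 6"
  and N5: "real (card V) * \<beta> * cB \<beta> \<alpha> \<ge> 6"
begin

abbreviation A where "A j x \<equiv> Aset V E \<beta> \<alpha> j x"
abbreviation th where "th \<equiv> theta \<beta>"

lemma alpha_pos: "\<alpha> > 0" and alpha_small: "\<alpha> \<le> 1/10000" using \<alpha> \<gamma> by auto

lemma n_pos: "real (card V) > 0"
proof (rule ccontr)
  assume "\<not> real (card V) > 0" hence "card V = 0" by simp
  thus False using N3 by simp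
qed

lemma V_ne: "V \<noteq> {}" using n_pos by auto

lemma nbr: assumes "v \<in> V" shows "\<exists>w. close V E 1 \<beta> v w"
proof -
  have "(1/4 - 3*\<gamma>) * real (card V) > 0" using \<gamma> n_pos by simp
  hence "card (closeN V E 1 \<beta> v) > 0" using deg[OF assms] by linarith
  then obtain w where "w \<in> closeN V E 1 \<beta> v" by (metis card_gt_0_iff ex_in_conv)
  thus ?thesis unfolding closeN_def by auto
qed

lemma Kb: "real (card (Kset V E)) \<ge> \<beta> / 64 * real (card V) ^ 4"
  using K_count[OF fin nbr] \<beta> by auto

lemma th_pos: "0 < th" and th_le1: "th \<le> 1"
  using \<beta> unfolding theta_def by auto

lemma pad1:
  assumes "close V E L c x y" "1 \<le> L" "L + 1 \<le> 16" "c \<ge> 0"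
  shows "close V E (L+1) (c * th) x y"
proof -
  have "close V E (L+1) (c * (\<beta>/64) / 4^68) x y"
    by (rule pad[OF fin assms(2,3) _ assms(1) assms(4)]) (use Kb N1 \<beta> in \<open>auto simp: mult.commute\<close>)
  thus ?thesis unfolding theta_def by (simp add: algebra_simps)
qed

lemma padm:
  assumes "close V E L c x y" "1 \<le> L" "L + m \<le> 16" "c \<ge> 0"
  shows "close V E (L+m) (c * th ^ m) x y"
  using assms(3)
proof (induction m)
  case 0 thus ?case using assms(1) by simp
next
  case (Suc m)
  hence "close V E (L+m) (c * th ^ m) x y" by simp
  hence "close V E (L+m+1) (c * th ^ m * th) x y"
    using Suc.prems assms(2,4) th_pos by (intro pad1) auto
  thus ?case by (simp add: algebra_simps)
qed

lemma pad16:
  assumes "close V E L c x y" "1 \<le> L" "L \<le> 16" "c \<ge> 0"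
  shows "close V E 16 (c * th ^ 16) x y"
proof -
  have "close V E (L + (16 - L)) (c * th ^ (16 - L)) x y"
    using assms by (intro padm) auto
  moreover have "c * th ^ 16 \<le> c * th ^ (16 - L)"
    using assms(4) th_pos th_le1 by (intro mult_left_mono power_decreasing) auto
  ultimately show ?thesis using assms(3) by (auto intro: close_mono)
qed

lemma bb_pos: "0 < bb \<beta> \<alpha> j \<and> bb \<beta> \<alpha> j \<le> \<beta>"
proof (induction j)
  case 0 thus ?case using \<beta> by simp
next
  case (Suc j)
  let ?b = "bb \<beta> \<alpha> j"
  have f: "(\<alpha>/2) * ?b / 4^67 * th ^ 16 \<le> 1"
  proof -
    have "(\<alpha>/2) * ?b \<le> 1 * 1" using Suc.IH alpha_pos alpha_small \<beta> by (intro mult_mono) auto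
    moreover have "th ^ 16 \<le> 1" using th_pos th_le1 by (simp add: power_le_one)
    ultimately have "(\<alpha>/2) * ?b * th^16 \<le> 1 * 1" using th_pos Suc.IH alpha_pos
      by (intro mult_mono) auto
    thus ?thesis by (simp add: field_simps)
  qed
  have e: "bb \<beta> \<alpha> (Suc j) = ?b * ((\<alpha>/2) * ?b / 4^67 * th ^ 16)" by (simp add: algebra_simps)
  have le: "?b * ((\<alpha>/2) * ?b / 4^67 * th ^ 16) \<le> ?b * 1"
    using f Suc.IH by (intro mult_left_mono) auto
  have "bb \<beta> \<alpha> (Suc j) \<le> ?b * 1" unfolding e by (rule le)
  hence h1: "bb \<beta> \<alpha> (Suc j) \<le> ?b" by simp
  have h2: "bb \<beta> \<alpha> (Suc j) > 0" using Suc.IH alpha_pos th_pos by simp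
  show ?case
  proof (rule conjI)
    show "0 < bb \<beta> \<alpha> (Suc j)" by (rule h2)
    show "bb \<beta> \<alpha> (Suc j) \<le> \<beta>" using h1 Suc.IH by linarith
  qed
qed

lemma bb_Suc_le: "bb \<beta> \<alpha> (Suc j) \<le> bb \<beta> \<alpha> j * th ^ 16"
proof -
  let ?b = "bb \<beta> \<alpha> j"
  have x1: "(\<alpha>/2) * ?b \<le> 1" using bb_pos[of j] alpha_pos alpha_small \<beta> by (intro mult_le_one) auto
  have x0: "(\<alpha>/2) * ?b \<ge> 0" using bb_pos[of j] alpha_pos by simp
  have "(\<alpha>/2) * ?b / 4^67 \<le> (\<alpha>/2) * ?b / 1" using x0 by (intro divide_left_mono) auto
  hence "(\<alpha>/2) * ?b / 4^67 \<le> 1" using x1 by simp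
  hence "?b * th^16 * ((\<alpha>/2) * ?b / 4^67) \<le> ?b * th^16 * 1"
    using bb_pos[of j] th_pos alpha_pos by (intro mult_left_mono) auto
  thus ?thesis by (simp add: algebra_simps)
qed

lemma bb_Suc_le': "bb \<beta> \<alpha> (Suc j) \<le> (\<alpha>/2) * bb \<beta> \<alpha> j * bb \<beta> \<alpha> j / 4^67"
proof -
  have "th ^ 16 \<le> 1" using th_pos th_le1 by (simp add: power_le_one)
  moreover have "(\<alpha>/2) * bb \<beta> \<alpha> j * bb \<beta> \<alpha> j / 4^67 \<ge> 0" using bb_pos[of j] alpha_pos by simp
  ultimately show ?thesis by (simp add: mult_left_le)
qed

lemma bb_anti: "i \<le> j \<Longrightarrow> bb \<beta> \<alpha> j \<le> bb \<beta> \<alpha> i"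
proof (induction j)
  case 0 thus ?case by simp
next
  case (Suc j)
  have "bb \<beta> \<alpha> (Suc j) \<le> bb \<beta> \<alpha> j"
  proof -
    have "th ^ 16 \<le> 1" using th_pos th_le1 by (simp add: power_le_one)
    hence "bb \<beta> \<alpha> j * th ^ 16 \<le> bb \<beta> \<alpha> j" using bb_pos[of j] by (simp add: mult_left_le)
    thus ?thesis using bb_Suc_le[of j] by linarith
  qed
  thus ?case using Suc by (cases "i = Suc j") auto
qed

lemma A_sub: "A j x \<subseteq> V"
  by (induction j) (auto simp: closeN_def)

lemma A_mono1: "A j x \<subseteq> A (Suc j) x" by simp

lemma A_mono: "i \<le> j \<Longrightarrow> A i x \<subseteq> A j x"
proof (induction j)
  case 0 thus ?case by simp
next
  case (Suc j) thus ?case by (cases "i = Suc j") auto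
qed

lemma A_sym: "x \<in> V \<Longrightarrow> y \<in> V \<Longrightarrow> y \<in> A j x \<longleftrightarrow> x \<in> A j y"
proof (induction j)
  case 0 thus ?case unfolding Aset.simps closeN_def using close_sym[of V E 1 \<beta> x y] by auto
next
  case (Suc j) thus ?case by (auto simp: Int_commute)
qed

lemma A_refl: "x \<in> V \<Longrightarrow> x \<in> A j x"
proof -
  assume x: "x \<in> V"
  obtain w where "close V E 1 \<beta> x w" using nbr[OF x] by blast
  hence "close V E 1 \<beta> x x" by (rule self_close[OF fin])
  hence "x \<in> A 0 x" using x by (simp add: closeN_def)
  thus ?thesis using A_mono[of 0 j] by auto
qed

lemma A_card: "x \<in> V \<Longrightarrow> real (card (A j x)) \<ge> (1/4 - 3*\<gamma>) * real (card V)"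
proof -
  assume x: "x \<in> V"
  have "card (A 0 x) \<le> card (A j x)" using A_mono[of 0 j x] A_sub[of j x] fin
    by (intro card_mono) (auto intro: finite_subset)
  thus ?thesis using deg[OF x] by simp
qed

lemma A_close: "j \<le> 4 \<Longrightarrow> x \<in> V \<Longrightarrow> y \<in> A j x \<Longrightarrow> close V E (2^j) (bb \<beta> \<alpha> j) x y"
proof (induction j arbitrary: x y)
  case 0 thus ?case by (simp add: closeN_def)
next
  case (Suc j)
  have j4: "j < 4" using Suc.prems by simp
  show ?case
  proof (cases "y \<in> A j x")
    case True
    hence c: "close V E (2^j) (bb \<beta> \<alpha> j) x y" using Suc j4 by auto
    have "2^j + 2^j \<le> (16::nat)"
    proof -
      have "(2::nat)^j \<le> 2^3" using j4 by (intro power_increasing) auto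
      thus ?thesis by simp
    qed
    hence "close V E (2^j + 2^j) (bb \<beta> \<alpha> j * th ^ (2^j)) x y"
      using bb_pos[of j] by (intro padm[OF c]) auto
    moreover have "bb \<beta> \<alpha> (Suc j) \<le> bb \<beta> \<alpha> j * th ^ (2^j)"
    proof -
      have "th ^ 16 \<le> th ^ (2^j)" using th_pos th_le1 \<open>2^j + 2^j \<le> (16::nat)\<close>
        by (intro power_decreasing) auto
      hence "bb \<beta> \<alpha> j * th ^ 16 \<le> bb \<beta> \<alpha> j * th ^ (2^j)" using bb_pos[of j] by (intro mult_left_mono) auto
      thus ?thesis using bb_Suc_le[of j] by linarith
    qed
    ultimately show ?thesis by (auto intro: close_mono simp: mult_2)
  next
    case False
    hence y: "y \<in> V" "real (card (A j x \<inter> A j y)) \<ge> \<alpha> * real (card V)" using Suc.prems by auto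
    define Z where "Z = A j x \<inter> A j y - {x, y}"
    have finA: "finite (A j x \<inter> A j y)" using A_sub[of j x] fin by (auto intro: finite_subset)
    have "card (A j x \<inter> A j y) \<le> card Z + card {x, y}"
    proof -
      have "A j x \<inter> A j y \<subseteq> Z \<union> {x, y}" unfolding Z_def by blast
      moreover have "finite Z" unfolding Z_def using finA by simp
      ultimately have "card (A j x \<inter> A j y) \<le> card (Z \<union> {x, y})" by (intro card_mono) auto
      also have "\<dots> \<le> card Z + card {x, y}" by (rule card_Un_le)
      finally show ?thesis .
    qed
    moreover have "card {x, y} \<le> 2" by (simp add: card_insert_if)
    ultimately have "real (card Z) \<ge> \<alpha> * real (card V) - 2" using y(2) by linarith
    moreover have "\<alpha> / 2 * real (card V) = (real (card V) * \<alpha>) / 2" by simp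
    ultimately have cZ: "real (card Z) \<ge> \<alpha> / 2 * real (card V)" using N3 by linarith
    have c1: "close V E (2^j) (bb \<beta> \<alpha> j) x z" if "z \<in> Z" for z
      using that Suc.IH[of x z] Suc.prems j4 unfolding Z_def by auto
    have c2: "close V E (2^j) (bb \<beta> \<alpha> j) z y" if "z \<in> Z" for z
    proof -
      have zV: "z \<in> V" using that A_sub unfolding Z_def by blast
      have "z \<in> A j y" using that unfolding Z_def by blast
      hence "y \<in> A j z" using A_sym[OF zV y(1)] by blast
      thus ?thesis using Suc.IH[of z y] zV j4 by auto
    qed
    have "2^j + 2^j \<le> (16::nat)"
    proof -
      have "(2::nat)^j \<le> 2^3" using j4 by (intro power_increasing) auto
      thus ?thesis by simp
    qed
    have "close V E (2^j + 2^j) (\<alpha>/2 * bb \<beta> \<alpha> j * bb \<beta> \<alpha> j / 4^67) x y"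
    proof (rule compose[OF fin])
      show "Z \<subseteq> V" using A_sub unfolding Z_def by blast
      show "x \<notin> Z" "y \<notin> Z" unfolding Z_def by auto
    qed (use cZ c1 c2 bb_pos[of j] alpha_pos N2[OF j4] \<open>2^j + 2^j \<le> (16::nat)\<close> in auto)
    moreover have "bb \<beta> \<alpha> (Suc j) \<le> \<alpha>/2 * bb \<beta> \<alpha> j * bb \<beta> \<alpha> j / 4^67" using bb_Suc_le' by simp
    ultimately show ?thesis by (auto intro: close_mono simp: mult_2)
  qed
qed

end



lemma union_lb:
  fixes F :: "'b \<Rightarrow> 'a set"
  assumes "finite D" "\<And>x. x \<in> D \<Longrightarrow> finite (F x)"
  shows "real (card (\<Union>x\<in>D. F x)) \<ge> (\<Sum>x\<in>D. real (card (F x))) - (\<Sum>x\<in>D. \<Sum>y\<in>D-{x}. real (card (F x \<inter> F y)))"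
  using assms
proof (induction D rule: finite_induct)
  case empty thus ?case by simp
next
  case (insert a D)
  let ?U = "\<Union>x\<in>D. F x"
  let ?c = "\<lambda>x y. real (card (F x \<inter> F y))"
  have finU: "finite ?U" using insert by auto
  have fa: "finite (F a)" using insert by auto
  have e1: "card (F a \<union> ?U) + card (F a \<inter> ?U) = card (F a) + card ?U" using card_Un_Int[OF fa finU] by simp
  have "F a \<inter> ?U = (\<Union>y\<in>D. F a \<inter> F y)" by auto
  hence e2: "card (F a \<inter> ?U) \<le> (\<Sum>y\<in>D. card (F a \<inter> F y))"
    using card_UN_le[OF insert(1), of "\<lambda>y. F a \<inter> F y"] by simp
  have IH: "real (card ?U) \<ge> (\<Sum>x\<in>D. real (card (F x))) - (\<Sum>x\<in>D. \<Sum>y\<in>D-{x}. ?c x y)"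
    using insert by auto
  have S1: "(\<Sum>x\<in>insert a D. real (card (F x))) = real (card (F a)) + (\<Sum>x\<in>D. real (card (F x)))"
    using insert by simp
  have S2: "(\<Sum>x\<in>insert a D. \<Sum>y\<in>insert a D-{x}. ?c x y) = (\<Sum>y\<in>insert a D - {a}. ?c a y) + (\<Sum>x\<in>D. \<Sum>y\<in>insert a D-{x}. ?c x y)"
    using insert by simp
  have "insert a D - {a} = D" using insert(2) by auto
  hence S4: "(\<Sum>y\<in>insert a D - {a}. ?c a y) = (\<Sum>y\<in>D. real (card (F a \<inter> F y)))" by simp
  have S3: "(\<Sum>x\<in>D. \<Sum>y\<in>D-{x}. ?c x y) \<le> (\<Sum>x\<in>D. \<Sum>y\<in>insert a D-{x}. ?c x y)"
    using insert(1) by (intro sum_mono sum_mono2) auto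
  have e2': "real (card (F a \<inter> ?U)) \<le> (\<Sum>y\<in>D. real (card (F a \<inter> F y)))"
    using e2 by (metis of_nat_le_iff of_nat_sum)
  have e1': "real (card (F a \<union> ?U)) = real (card (F a)) + real (card ?U) - real (card (F a \<inter> ?U))"
    using e1 by (metis add_diff_cancel_right' of_nat_add)
  have "real (card (\<Union>x\<in>insert a D. F x)) = real (card (F a \<union> ?U))" by simp
  thus ?case using e1' e2' IH S1 S2 S3 S4 by linarith
qed

context Hset begin

definition farset :: "nat \<Rightarrow> 'a set \<Rightarrow> bool" where
  "farset k D \<longleftrightarrow> D \<subseteq> V \<and> (\<forall>x\<in>D. \<forall>y\<in>D. x \<noteq> y \<longrightarrow> y \<notin> A (Suc k) x)"

lemma farset_mono: "farset (Suc k) D \<Longrightarrow> farset k D"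
  unfolding farset_def using A_mono1 by blast

lemma farset_sub: "farset k D \<Longrightarrow> D' \<subseteq> D \<Longrightarrow> farset k D'"
  unfolding farset_def by blast

lemma farset_fin: "farset k D \<Longrightarrow> finite D"
  unfolding farset_def using fin finite_subset by blast

lemma far_small:
  assumes "x \<in> V" "y \<in> V" "y \<notin> A (Suc k) x"
  shows "real (card (A k x \<inter> A k y)) < \<alpha> * real (card V)"
  using assms by auto

lemma farset_le4: assumes "farset k D" shows "card D \<le> 4"
proof (rule ccontr)
  assume "\<not> card D \<le> 4"
  hence "5 \<le> card D" by simp
  then obtain D' where D': "D' \<subseteq> D" "card D' = 5" using obtain_subset_with_card_n by metis
  have fD: "farset k D'" using farset_sub[OF assms D'(1)] .
  have finD': "finite D'" using farset_fin[OF fD] .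
  have DV: "D' \<subseteq> V" using fD unfolding farset_def by blast
  let ?F = "\<lambda>x. A k x"
  have fF: "finite (?F x)" for x using A_sub[of k x] fin by (auto intro: finite_subset)
  have lb: "real (card (\<Union>x\<in>D'. ?F x)) \<ge> (\<Sum>x\<in>D'. real (card (?F x))) - (\<Sum>x\<in>D'. \<Sum>y\<in>D'-{x}. real (card (?F x \<inter> ?F y)))"
    by (rule union_lb[OF finD' fF])
  have "(\<Union>x\<in>D'. ?F x) \<subseteq> V" using A_sub by blast
  hence ub: "real (card (\<Union>x\<in>D'. ?F x)) \<le> real (card V)" using fin by (simp add: card_mono)
  have s1: "(\<Sum>x\<in>D'. real (card (?F x))) \<ge> (\<Sum>x\<in>D'. (1/4 - 3*\<gamma>) * real (card V))"
    using DV A_card by (intro sum_mono) auto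
  have s2: "(\<Sum>x\<in>D'. \<Sum>y\<in>D'-{x}. real (card (?F x \<inter> ?F y))) \<le> (\<Sum>x\<in>D'. \<Sum>y\<in>D'-{x}. \<alpha> * real (card V))"
  proof (intro sum_mono)
    fix x y assume "x \<in> D'" "y \<in> D' - {x}"
    hence "x \<in> V" "y \<in> V" "y \<notin> A (Suc k) x" using fD unfolding farset_def by auto
    thus "real (card (?F x \<inter> ?F y)) \<le> \<alpha> * real (card V)" using far_small by fastforce
  qed
  have "(\<Sum>x\<in>D'. \<Sum>y\<in>D'-{x}. \<alpha> * real (card V)) = (\<Sum>x\<in>D'. 4 * (\<alpha> * real (card V)))"
    using D'(2) finD' by (intro sum.cong) (auto simp: card_Diff_singleton)
  also have "\<dots> = 20 * (\<alpha> * real (card V))" using D'(2) by simp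
  finally have s2': "(\<Sum>x\<in>D'. \<Sum>y\<in>D'-{x}. \<alpha> * real (card V)) = 20 * (\<alpha> * real (card V))" .
  have s1': "(\<Sum>x\<in>D'. (1/4 - 3*\<gamma>) * real (card V)) = 5 * ((1/4 - 3*\<gamma>) * real (card V))" using D'(2) by simp
  have "real (card V) \<ge> 5 * ((1/4 - 3*\<gamma>) * real (card V)) - 20 * (\<alpha> * real (card V))"
    using lb ub s1 s2 s2' s1' by linarith
  hence "0 \<ge> (5 * (1/4 - 3*\<gamma>) - 20 * \<alpha> - 1) * real (card V)" by (simp add: algebra_simps)
  moreover have "5 * (1/4 - 3*\<gamma>) - 20 * \<alpha> - 1 > 0" using \<gamma> \<alpha> by simp
  ultimately show False using n_pos by (simp add: mult_le_0_iff)
qed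

end



context Hset begin

abbreviation cA where "cA \<equiv> bb \<beta> \<alpha> 4"

lemma consts_pos: "cA > 0" "cB \<beta> \<alpha> > 0" "cC \<beta> \<alpha> > 0"
  using bb_pos[of 4] alpha_pos \<beta> unfolding cB_def cC_def by auto

lemma consts_le: "cC \<beta> \<alpha> \<le> cB \<beta> \<alpha>" "cB \<beta> \<alpha> \<le> cA"
proof -
  have f: "(\<alpha>/2) * \<beta> / 4^67 \<le> 1"
  proof -
    have "(\<alpha>/2) * \<beta> \<le> 1" using alpha_pos alpha_small \<beta> by (intro mult_le_one) auto
    moreover have "(\<alpha>/2) * \<beta> / 4^67 \<le> (\<alpha>/2) * \<beta> / 1" using alpha_pos \<beta> by (intro divide_left_mono) auto
    ultimately show ?thesis by simp
  qed
  have "cC \<beta> \<alpha> = cB \<beta> \<alpha> * ((\<alpha>/2) * \<beta> / 4^67)" unfolding cC_def by (simp add: algebra_simps)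
  also have "\<dots> \<le> cB \<beta> \<alpha> * 1" using f consts_pos by (intro mult_left_mono) auto
  finally show "cC \<beta> \<alpha> \<le> cB \<beta> \<alpha>" by simp
  have "cB \<beta> \<alpha> = cA * ((\<alpha>/2) * \<beta> / 4^67)" unfolding cB_def by (simp add: algebra_simps)
  also have "\<dots> \<le> cA * 1" using f consts_pos by (intro mult_left_mono) auto
  finally show "cB \<beta> \<alpha> \<le> cA" by simp
qed

abbreviation eta0 where "eta0 \<equiv> cC \<beta> \<alpha> * th ^ 16"

lemma final_close:
  assumes "close V E L c x y" "1 \<le> L" "L \<le> 16" "c \<ge> cC \<beta> \<alpha>"
  shows "close V E 16 eta0 x y"
proof -
  have "close V E 16 (c * th^16) x y" using assms consts_pos by (intro pad16) auto
  moreover have "eta0 \<le> c * th^16" using assms(4) th_pos by (intro mult_right_mono) auto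
  ultimately show ?thesis by (rule close_mono)
qed

lemma all_close_case:
  assumes "\<And>x y. x \<in> V \<Longrightarrow> y \<in> V \<Longrightarrow> y \<in> A 4 x"
  shows "\<exists>P. partition_on V P \<and> card P \<le> 4 \<and>
     (\<forall>U\<in>P. closed_set V E 16 eta0 U \<and> real (card U) \<ge> (1/4 - 4*\<gamma>) * real (card V))"
proof (intro exI conjI)
  show "partition_on V {V}" using V_ne by (rule partition_on_space)
  show "card {V} \<le> 4" by simp
  show "\<forall>U\<in>{V}. closed_set V E 16 eta0 U \<and> real (card U) \<ge> (1/4 - 4*\<gamma>) * real (card V)"
  proof
    fix U assume "U \<in> {V}" hence U: "U = V" by simp
    have "closed_set V E 16 eta0 V" unfolding closed_set_def
    proof (intro ballI impI)
      fix x y assume xy: "x \<in> V" "y \<in> V" "x \<noteq> y"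
      have "close V E (2^4) cA x y" using A_close[of 4 x y] assms xy by auto
      hence c: "close V E 16 cA x y" by simp
      show "close V E 16 eta0 x y" using final_close[OF c] consts_le by auto
    qed
    moreover have "real (card V) \<ge> (1/4 - 4*\<gamma>) * real (card V)" using \<gamma> n_pos by (simp add: mult_le_cancel_right1)
    ultimately show "closed_set V E 16 eta0 U \<and> real (card U) \<ge> (1/4 - 4*\<gamma>) * real (card V)" using U by simp
  qed
qed


lemma stable_case:
  assumes k: "k \<le> 2" and D: "farset (Suc k) D" and mx: "\<And>D'. farset k D' \<Longrightarrow> card D' \<le> card D"
  shows "\<exists>P. partition_on V P \<and> card P \<le> 4 \<and>
     (\<forall>U\<in>P. closed_set V E 16 eta0 U \<and> real (card U) \<ge> (1/4 - 4*\<gamma>) * real (card V))"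
proof -
  define n where "n = real (card V)"
  define U where "U v = A (Suc k) v" for v
  have Dk: "farset k D" using farset_mono[OF D] .
  have finD: "finite D" using farset_fin[OF D] .
  have DV: "D \<subseteq> V" using D unfolding farset_def by blast
  have cD: "card D \<le> 4" using farset_le4[OF D] .
  have Dfar: "\<And>x y. x \<in> D \<Longrightarrow> y \<in> D \<Longrightarrow> x \<noteq> y \<Longrightarrow> y \<notin> A (Suc k) x" using Dk unfolding farset_def by blast
  have UV: "U v \<subseteq> V" for v unfolding U_def using A_sub by blast
  have finU: "finite (U v)" for v using UV fin finite_subset by blast
  have Uref: "v \<in> U v" if "v \<in> V" for v unfolding U_def using A_refl[OF that] .
  have cover: "\<exists>v\<in>D. u \<in> U v" if u: "u \<in> V" for u
  proof (cases "u \<in> D")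
    case True thus ?thesis using Uref[OF u] by blast
  next
    case False
    have "card (insert u D) = card D + 1" using False finD by simp
    hence "\<not> farset k (insert u D)" using mx[of "insert u D"] by auto
    then obtain x y where xy: "x \<in> insert u D" "y \<in> insert u D" "x \<noteq> y" "y \<in> A (Suc k) x"
      using DV u unfolding farset_def by blast
    show ?thesis
    proof (cases "x = u")
      case True
      hence yD: "y \<in> D" using xy by auto
      hence "u \<in> A (Suc k) y" using A_sym[OF u, of y "Suc k"] DV xy(4) True by blast
      thus ?thesis using yD unfolding U_def by blast
    next
      case False
      hence xD: "x \<in> D" using xy by auto
      show ?thesis
      proof (cases "y = u")
        case True thus ?thesis using xD xy(4) unfolding U_def by blast
      next
        case False
        hence "y \<in> D" using xy by auto
        thus ?thesis using Dfar[OF xD _ xy(3)] xy(4) by blast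
      qed
    qed
  qed
  have ov: "real (card (U v \<inter> U v')) < \<alpha> * n" if "v \<in> D" "v' \<in> D" "v \<noteq> v'" for v v'
  proof -
    have nf: "v' \<notin> A (Suc (Suc k)) v" using D that unfolding farset_def by blast
    have "v' \<in> V" using that DV by blast
    hence "\<not> (real (card (A (Suc k) v \<inter> A (Suc k) v')) \<ge> \<alpha> * real (card V))"
      using nf by (simp only: Aset.simps(2) Un_iff mem_Collect_eq) blast
    thus ?thesis unfolding U_def n_def by simp
  qed
  define Ex where "Ex v = U v - (\<Union>v'\<in>D-{v}. U v')" for v
  have ExU: "Ex v \<subseteq> U v" for v unfolding Ex_def by blast
  have ExV: "Ex v \<subseteq> V" for v using ExU UV by blast
  have finEx: "finite (Ex v)" for v using ExV fin finite_subset by blast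
  have cDv: "card (D - {v}) \<le> 3" if "v \<in> D" for v using cD that finD by (simp add: card_Diff_singleton)
  have sum_ov: "(\<Sum>v'\<in>D-{v}. real (card (U v \<inter> U v'))) \<le> 3 * (\<alpha> * n)" if v: "v \<in> D" for v
  proof -
    have "(\<Sum>v'\<in>D-{v}. real (card (U v \<inter> U v'))) \<le> (\<Sum>v'\<in>D-{v}. \<alpha> * n)"
      using ov v by (intro sum_mono) (auto intro: less_imp_le)
    also have "\<dots> = real (card (D - {v})) * (\<alpha> * n)" by simp
    also have "\<dots> \<le> 3 * (\<alpha> * n)" using cDv[OF v] alpha_pos n_pos unfolding n_def
      by (intro mult_right_mono) auto
    finally show ?thesis .
  qed
  have cEx: "real (card (Ex v)) \<ge> (1/4 - 3*\<gamma>) * n - 3 * (\<alpha> * n)" if v: "v \<in> D" for v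
  proof -
    have sub: "U v \<subseteq> Ex v \<union> (\<Union>v'\<in>D-{v}. U v \<inter> U v')" unfolding Ex_def by blast
    have "card (U v) \<le> card (Ex v \<union> (\<Union>v'\<in>D-{v}. U v \<inter> U v'))"
      by (rule card_mono[OF _ sub]) (use finEx finU finD in blast)
    also have "\<dots> \<le> card (Ex v) + card (\<Union>v'\<in>D-{v}. U v \<inter> U v')" by (rule card_Un_le)
    also have "card (\<Union>v'\<in>D-{v}. U v \<inter> U v') \<le> (\<Sum>v'\<in>D-{v}. card (U v \<inter> U v'))"
      using finD by (intro card_UN_le) auto
    finally have "card (U v) \<le> card (Ex v) + (\<Sum>v'\<in>D-{v}. card (U v \<inter> U v'))" by simp
    hence "real (card (U v)) \<le> real (card (Ex v)) + (\<Sum>v'\<in>D-{v}. real (card (U v \<inter> U v')))"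
      by (metis of_nat_add of_nat_le_iff of_nat_sum)
    moreover have "real (card (U v)) \<ge> (1/4 - 3*\<gamma>) * n" unfolding U_def n_def using A_card DV v by blast
    ultimately show ?thesis using sum_ov[OF v] by linarith
  qed
  have exclusive: "u \<notin> U w" if "u \<in> Ex v" "w \<in> D" "w \<noteq> v" for u v w
    using that unfolding Ex_def by blast
  have exclose: "u' \<in> A (Suc k) u" if v: "v \<in> D" and u: "u \<in> Ex v" "u' \<in> Ex v" "u \<noteq> u'" for v u u'
  proof (rule ccontr)
    assume nf: "u' \<notin> A (Suc k) u"
    have uV: "u \<in> V" "u' \<in> V" using u ExV by blast+
    have nf2: "u \<notin> A (Suc k) u'" using nf A_sym[OF uV(1) uV(2)] by blast
    have un: "u \<notin> D - {v}" "u' \<notin> D - {v}"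
      using exclusive[OF u(1)] exclusive[OF u(2)] Uref uV by blast+
    have f1: "u \<notin> A (Suc k) w \<and> u' \<notin> A (Suc k) w \<and> w \<notin> A (Suc k) u \<and> w \<notin> A (Suc k) u'"
      if w: "w \<in> D - {v}" for w
    proof -
      have wV: "w \<in> V" using w DV by blast
      have a1: "u \<notin> A (Suc k) w" using exclusive[OF u(1)] w unfolding U_def by blast
      have a2: "u' \<notin> A (Suc k) w" using exclusive[OF u(2)] w unfolding U_def by blast
      show ?thesis using a1 a2 A_sym[OF wV uV(1)] A_sym[OF wV uV(2)] by blast
    qed
    define D'' where "D'' = insert u (insert u' (D - {v}))"
    have "farset k D''" unfolding farset_def
    proof (intro conjI ballI impI)
      show "D'' \<subseteq> V" unfolding D''_def using uV DV by blast
      fix x y assume xy: "x \<in> D''" "y \<in> D''" "x \<noteq> y"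
      show "y \<notin> A (Suc k) x"
        using xy f1 nf nf2 Dfar unfolding D''_def by blast
    qed
    hence "card D'' \<le> card D" by (rule mx)
    moreover have "card D'' = card D + 1"
    proof -
      have "card D'' = Suc (Suc (card (D - {v})))" unfolding D''_def using un u(3) finD by simp
      moreover have "card (D - {v}) = card D - 1" using v finD by (simp add: card_Diff_singleton)
      moreover have "card D \<ge> 1" using v finD by (metis One_nat_def Suc_leI card_gt_0_iff empty_iff)
      ultimately show ?thesis by simp
    qed
    ultimately show False by simp
  qed
  define Ov where "Ov = V - (\<Union>v\<in>D. Ex v)"
  have OvV: "Ov \<subseteq> V" unfolding Ov_def by blast
  have finOv: "finite Ov" using OvV fin finite_subset by blast
  have OvEx: "w \<notin> Ex v" if "w \<in> Ov" "v \<in> D" for w v using that unfolding Ov_def by blast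
  have cOv: "real (card Ov) \<le> 12 * (\<alpha> * n)"
  proof -
    have sub: "Ov \<subseteq> (\<Union>v\<in>D. \<Union>v'\<in>D-{v}. U v \<inter> U v')"
    proof
      fix w assume w: "w \<in> Ov"
      then obtain v where v: "v \<in> D" "w \<in> U v" using cover OvV by blast
      have "w \<notin> Ex v" using OvEx[OF w v(1)] .
      then obtain v' where "v' \<in> D - {v}" "w \<in> U v'" using v(2) unfolding Ex_def by blast
      thus "w \<in> (\<Union>v\<in>D. \<Union>v'\<in>D-{v}. U v \<inter> U v')" using v by blast
    qed
    have "card Ov \<le> card (\<Union>v\<in>D. \<Union>v'\<in>D-{v}. U v \<inter> U v')"
      by (rule card_mono[OF _ sub]) (use finD finU in blast)
    also have "\<dots> \<le> (\<Sum>v\<in>D. card (\<Union>v'\<in>D-{v}. U v \<inter> U v'))" using finD by (rule card_UN_le)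
    also have "\<dots> \<le> (\<Sum>v\<in>D. \<Sum>v'\<in>D-{v}. card (U v \<inter> U v'))"
      using finD by (intro sum_mono card_UN_le) auto
    finally have "real (card Ov) \<le> (\<Sum>v\<in>D. \<Sum>v'\<in>D-{v}. real (card (U v \<inter> U v')))"
      by (metis (no_types, lifting) of_nat_le_iff of_nat_sum sum.cong)
    also have "\<dots> \<le> (\<Sum>v\<in>D. 3 * (\<alpha> * n))" by (intro sum_mono sum_ov)
    also have "\<dots> = real (card D) * (3 * (\<alpha> * n))" by simp
    also have "\<dots> \<le> 4 * (3 * (\<alpha> * n))" using cD alpha_pos n_pos unfolding n_def by (intro mult_right_mono) auto
    finally show ?thesis by simp
  qed
  define c0 where "c0 = ((1/4 - 3*\<gamma>) - 12*\<alpha>) / 4 * n"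
  have Dne: "D \<noteq> {}" using cover V_ne by blast
  have assign_ex: "\<exists>v\<in>D. real (card (A 0 w \<inter> Ex v)) \<ge> c0" if w: "w \<in> V" for w
  proof (rule ccontr)
    assume "\<not> ?thesis"
    hence lt: "\<forall>v\<in>D. real (card (A 0 w \<inter> Ex v)) < c0" by auto
    have sub: "A 0 w \<subseteq> Ov \<union> (\<Union>v\<in>D. A 0 w \<inter> Ex v)" using A_sub[of 0 w] unfolding Ov_def by blast
    have "card (A 0 w) \<le> card (Ov \<union> (\<Union>v\<in>D. A 0 w \<inter> Ex v))"
      by (rule card_mono[OF _ sub]) (use finOv finD finEx in auto)
    also have "\<dots> \<le> card Ov + card (\<Union>v\<in>D. A 0 w \<inter> Ex v)" by (rule card_Un_le)
    also have "card (\<Union>v\<in>D. A 0 w \<inter> Ex v) \<le> (\<Sum>v\<in>D. card (A 0 w \<inter> Ex v))" using finD by (rule card_UN_le)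
    finally have "card (A 0 w) \<le> card Ov + (\<Sum>v\<in>D. card (A 0 w \<inter> Ex v))" by simp
    hence "real (card (A 0 w)) \<le> real (card Ov + (\<Sum>v\<in>D. card (A 0 w \<inter> Ex v)))" by (simp only: of_nat_le_iff)
    hence "real (card (A 0 w)) \<le> real (card Ov) + (\<Sum>v\<in>D. real (card (A 0 w \<inter> Ex v)))" by simp
    moreover have "(\<Sum>v\<in>D. real (card (A 0 w \<inter> Ex v))) < (\<Sum>v\<in>D. c0)"
      by (rule sum_strict_mono[OF finD Dne]) (use lt in blast)
    moreover have "(\<Sum>v\<in>D. c0) \<le> 4 * c0"
    proof -
      have h: "((1/4 - 3*\<gamma>) - 12*\<alpha>) / 4 \<ge> 0" using \<gamma> \<alpha> by simp
      have "c0 \<ge> 0" unfolding c0_def n_def using h by (intro mult_nonneg_nonneg) auto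
      moreover have "(\<Sum>v\<in>D. c0) = real (card D) * c0" by simp
      moreover have "real (card D) \<le> 4" using cD by simp
      ultimately show ?thesis by (metis mult_right_mono)
    qed
    moreover have "real (card (A 0 w)) \<ge> (1/4 - 3*\<gamma>) * n" unfolding n_def using A_card[OF w] .
    moreover have "4 * c0 = (1/4 - 3*\<gamma>) * n - 12 * (\<alpha> * n)" unfolding c0_def by (simp add: field_simps)
    ultimately show False using cOv by linarith
  qed
  define asg where "asg w = (SOME v. v \<in> D \<and> real (card (A 0 w \<inter> Ex v)) \<ge> c0)" for w
  have asg: "asg w \<in> D \<and> real (card (A 0 w \<inter> Ex (asg w))) \<ge> c0" if "w \<in> V" for w
    unfolding asg_def using assign_ex[OF that] by (rule someI2_bex) blast
  define Cl where "Cl v = Ex v \<union> {w \<in> Ov. asg w = v}" for v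
  define La :: nat where "La = 2^(Suc k)"
  have La: "2 \<le> La" "La \<le> 8"
  proof -
    have "(2::nat)^1 \<le> 2^(Suc k)" by (intro power_increasing) auto
    thus "2 \<le> La" unfolding La_def by simp
    have "(2::nat)^(Suc k) \<le> 2^3" using k by (intro power_increasing) auto
    thus "La \<le> 8" unfolding La_def by simp
  qed
  have ca: "close V E La cA u u'" if "v \<in> D" "u \<in> Ex v" "u' \<in> Ex v" "u \<noteq> u'" for v u u'
  proof -
    have "u' \<in> A (Suc k) u" by (rule exclose[OF that])
    moreover have "u \<in> V" using that ExV by blast
    ultimately have "close V E (2^(Suc k)) (bb \<beta> \<alpha> (Suc k)) u u'" using k by (intro A_close) auto
    moreover have "cA \<le> bb \<beta> \<alpha> (Suc k)" using k by (intro bb_anti) auto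
    ultimately show ?thesis unfolding La_def by (rule close_mono)
  qed
  have nn: "c0 - 1 \<ge> \<alpha> / 2 * n"
  proof -
    have h1: "((1/4 - 3*\<gamma>) - 12*\<alpha>) / 4 \<ge> 1/20 + \<alpha>/2" using \<gamma> \<alpha> by simp
    have "c0 \<ge> (1/20 + \<alpha>/2) * n" unfolding c0_def using h1 n_pos unfolding n_def by (intro mult_right_mono) auto
    moreover have "n * \<alpha> \<le> n * (1/10000)" using alpha_small n_pos unfolding n_def by (intro mult_left_mono) auto
    moreover have "n * \<alpha> \<ge> 40" using N3 unfolding n_def .
    moreover have "(1/20 + \<alpha>/2) * n = n / 20 + \<alpha> / 2 * n" by (simp add: algebra_simps)
    ultimately show ?thesis by linarith
  qed
  have cb: "close V E (1 + La) (cB \<beta> \<alpha>) w u" if w: "w \<in> Ov" and u: "u \<in> Ex (asg w)" for w u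
  proof -
    have wV: "w \<in> V" using w OvV by blast
    have aw: "asg w \<in> D" "real (card (A 0 w \<inter> Ex (asg w))) \<ge> c0" using asg[OF wV] by auto
    define Z where "Z = A 0 w \<inter> Ex (asg w) - {u}"
    have finZ0: "finite (A 0 w \<inter> Ex (asg w))" using finEx by blast
    have "card (A 0 w \<inter> Ex (asg w)) \<le> card Z + 1"
    proof -
      have "A 0 w \<inter> Ex (asg w) \<subseteq> insert u Z" unfolding Z_def by blast
      hence "card (A 0 w \<inter> Ex (asg w)) \<le> card (insert u Z)" using finZ0 unfolding Z_def by (intro card_mono) auto
      also have "\<dots> \<le> Suc (card Z)"
      proof -
        have "finite Z" unfolding Z_def using finZ0 by simp
        thus ?thesis by (simp add: card_insert_if)
      qed
      finally show ?thesis by simp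
    qed
    hence cZ: "real (card Z) \<ge> \<alpha> / 2 * real (card V)" using aw(2) nn unfolding n_def by linarith
    have "close V E (1 + La) (\<alpha> / 2 * \<beta> * cA / 4^67) w u"
    proof (rule compose[OF fin])
      show "Z \<subseteq> V" unfolding Z_def using ExV by blast
      show "w \<notin> Z" unfolding Z_def using OvEx[OF w aw(1)] by blast
      show "u \<notin> Z" unfolding Z_def by blast
      show "close V E 1 \<beta> w z" if "z \<in> Z" for z using that unfolding Z_def by (simp add: closeN_def)
      show "close V E La cA z u" if "z \<in> Z" for z
        using that unfolding Z_def by (intro ca[OF aw(1)]) (auto simp: u)
    qed (use cZ La \<beta> consts_pos alpha_pos N4 in auto)
    thus ?thesis unfolding cB_def by simp
  qed
  have cc: "close V E (1 + (1 + La)) (cC \<beta> \<alpha>) w w'" if w: "w \<in> Ov" "w' \<in> Ov" "asg w = asg w'" for w w'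
  proof -
    have wV: "w \<in> V" using w OvV by blast
    have aw: "asg w \<in> D" "real (card (A 0 w \<inter> Ex (asg w))) \<ge> c0" using asg[OF wV] by auto
    define Z where "Z = A 0 w \<inter> Ex (asg w)"
    have cZ: "real (card Z) \<ge> \<alpha> / 2 * real (card V)" using aw(2) nn unfolding Z_def n_def by linarith
    have "close V E (1 + (1 + La)) (\<alpha> / 2 * \<beta> * cB \<beta> \<alpha> / 4^67) w w'"
    proof (rule compose[OF fin])
      show "Z \<subseteq> V" unfolding Z_def using ExV by blast
      show "w \<notin> Z" unfolding Z_def using OvEx[OF w(1) aw(1)] by blast
      show "w' \<notin> Z" unfolding Z_def using OvEx[OF w(2) aw(1)] by blast
      show "close V E 1 \<beta> w z" if "z \<in> Z" for z using that unfolding Z_def by (simp add: closeN_def)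
      show "close V E (1 + La) (cB \<beta> \<alpha>) z w'" if "z \<in> Z" for z
      proof -
        have "z \<in> Ex (asg w')" using that w(3) unfolding Z_def by simp
        hence "close V E (1 + La) (cB \<beta> \<alpha>) w' z" by (rule cb[OF w(2)])
        thus ?thesis using close_sym by metis
      qed
    qed (use cZ La \<beta> consts_pos alpha_pos N5 in auto)
    thus ?thesis unfolding cC_def by simp
  qed
  have Cl_V: "Cl v \<subseteq> V" for v unfolding Cl_def using ExV OvV by blast
  have Ex_disj: "Ex v \<inter> Ex v' = {}" if "v \<in> D" "v' \<in> D" "v \<noteq> v'" for v v'
    using that ExU unfolding Ex_def by blast
  have Cl_disj: "Cl v \<inter> Cl v' = {}" if "v \<in> D" "v' \<in> D" "v \<noteq> v'" for v v'
    unfolding Cl_def using Ex_disj[OF that] OvEx that by blast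
  have Ex_pos: "real (card (Ex v)) \<ge> (1/4 - 4*\<gamma>) * n" if v: "v \<in> D" for v
  proof -
    have "(\<gamma> - 3 * \<alpha>) * n \<ge> 0" using \<gamma> \<alpha> n_pos unfolding n_def by simp
    thus ?thesis using cEx[OF v] by (simp add: algebra_simps)
  qed
  have Ex_ne: "Ex v \<noteq> {}" if v: "v \<in> D" for v
  proof
    assume "Ex v = {}"
    hence "real (card (Ex v)) = 0" by simp
    moreover have "(1/4 - 4*\<gamma>) * n > 0" using \<gamma> n_pos unfolding n_def by simp
    ultimately show False using Ex_pos[OF v] by linarith
  qed
  have Cl_size: "real (card (Cl v)) \<ge> (1/4 - 4*\<gamma>) * real (card V)" if v: "v \<in> D" for v
  proof -
    have "finite (Cl v)" using Cl_V fin by (rule finite_subset)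
    hence "card (Ex v) \<le> card (Cl v)" by (intro card_mono) (auto simp: Cl_def)
    thus ?thesis using Ex_pos[OF v] unfolding n_def by linarith
  qed
  have La16: "1 \<le> La" "La \<le> 16" "1 \<le> 1 + La" "1 + La \<le> 16" "1 \<le> 1 + (1 + La)" "1 + (1 + La) \<le> 16"
    using La by auto
  have cle: "cC \<beta> \<alpha> \<le> cA" "cC \<beta> \<alpha> \<le> cB \<beta> \<alpha>" "cC \<beta> \<alpha> \<le> cC \<beta> \<alpha>" using consts_le by auto
  have Cl_closed: "closed_set V E 16 eta0 (Cl v)" if v: "v \<in> D" for v
    unfolding closed_set_def
  proof (intro ballI impI)
    fix x y assume xy: "x \<in> Cl v" "y \<in> Cl v" "x \<noteq> y"
    show "close V E 16 eta0 x y"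
    proof (cases "x \<in> Ex v")
      case xE: True
      show ?thesis
      proof (cases "y \<in> Ex v")
        case True
        have "close V E La cA x y" by (rule ca[OF v xE True xy(3)])
        thus ?thesis by (rule final_close) (use La16 cle in auto)
      next
        case False
        hence yO: "y \<in> Ov" "asg y = v" using xy(2) unfolding Cl_def by auto
        have "close V E (1 + La) (cB \<beta> \<alpha>) y x" using cb[OF yO(1)] xE yO(2) by simp
        hence "close V E (1 + La) (cB \<beta> \<alpha>) x y" using close_sym by metis
        thus ?thesis by (rule final_close) (use La16 cle in auto)
      qed
    next
      case xN: False
      hence xO: "x \<in> Ov" "asg x = v" using xy(1) unfolding Cl_def by auto
      show ?thesis
      proof (cases "y \<in> Ex v")
        case True
        have "close V E (1 + La) (cB \<beta> \<alpha>) x y" using cb[OF xO(1)] True xO(2) by simp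
        thus ?thesis by (rule final_close) (use La16 cle in auto)
      next
        case False
        hence yO: "y \<in> Ov" "asg y = v" using xy(2) unfolding Cl_def by auto
        have "close V E (1 + (1 + La)) (cC \<beta> \<alpha>) x y" using cc[OF xO(1) yO(1)] xO(2) yO(2) by simp
        thus ?thesis by (rule final_close) (use La16 cle in auto)
      qed
    qed
  qed
  show ?thesis
  proof (intro exI conjI)
    show "partition_on V (Cl ` D)"
    proof (rule partition_onI)
      show "\<Union>(Cl ` D) = V"
      proof
        show "\<Union>(Cl ` D) \<subseteq> V" using Cl_V by blast
        show "V \<subseteq> \<Union>(Cl ` D)"
        proof
          fix u assume u: "u \<in> V"
          show "u \<in> \<Union>(Cl ` D)"
          proof (cases "u \<in> Ov")
            case True
            hence "u \<in> Cl (asg u)" unfolding Cl_def by simp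
            thus ?thesis using asg[OF u] by blast
          next
            case False
            then obtain v where "v \<in> D" "u \<in> Ex v" using u unfolding Ov_def by blast
            thus ?thesis unfolding Cl_def by blast
          qed
        qed
      qed
      fix p q assume pq: "p \<in> Cl ` D" "q \<in> Cl ` D" "p \<noteq> q"
      then obtain v v' where vv: "v \<in> D" "v' \<in> D" "p = Cl v" "q = Cl v'" by blast
      hence "v \<noteq> v'" using pq(3) by blast
      thus "disjnt p q" using Cl_disj[OF vv(1,2)] vv(3,4) by (simp add: disjnt_def)
    next
      show "{} \<notin> Cl ` D"
      proof
        assume "{} \<in> Cl ` D"
        then obtain v where "v \<in> D" "Cl v = {}" by (metis imageE)
        thus False using Ex_ne unfolding Cl_def by blast
      qed
    qed
    show "card (Cl ` D) \<le> 4" using card_image_le[OF finD, of Cl] cD by linarith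
    show "\<forall>U\<in>Cl ` D. closed_set V E 16 eta0 U \<and> real (card U) \<ge> (1/4 - 4*\<gamma>) * real (card V)"
      using Cl_closed Cl_size by blast
  qed
qed

lemma main_part:
  shows "\<exists>P. partition_on V P \<and> card P \<le> 4 \<and>
     (\<forall>U\<in>P. closed_set V E 16 eta0 U \<and> real (card U) \<ge> (1/4 - 4*\<gamma>) * real (card V))"
    (is "\<exists>P. ?G P")
proof -
  define Ms where "Ms k = {card D | D. farset k D}" for k
  define M where "M k = Max (Ms k)" for k
  have Ms_fin: "finite (Ms k)" for k
    by (rule finite_subset[of _ "{..4}"]) (auto simp: Ms_def dest: farset_le4)
  have e0: "farset k {}" for k unfolding farset_def by simp
  have Ms_ne: "Ms k \<noteq> {}" for k unfolding Ms_def using e0 by blast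
  have M_ge: "card D \<le> M k" if "farset k D" for k D
    unfolding M_def using that Ms_fin by (intro Max_ge) (auto simp: Ms_def)
  have M_ex: "\<exists>D. farset k D \<and> card D = M k" for k
  proof -
    have "M k \<in> Ms k" unfolding M_def using Ms_fin Ms_ne by (rule Max_in)
    thus ?thesis unfolding Ms_def by auto
  qed
  have M_le4: "M k \<le> 4" for k using M_ex[of k] farset_le4 by metis
  have M_ge1: "M k \<ge> 1" for k
  proof -
    obtain v where "v \<in> V" using V_ne by blast
    hence "farset k {v}" unfolding farset_def by simp
    thus ?thesis using M_ge by fastforce
  qed
  have M_dec: "M (Suc k) \<le> M k" for k
    using M_ex[of "Suc k"] M_ge farset_mono by metis
  have stable: "\<exists>P. ?G P" if "M (Suc k) = M k" "k \<le> 2" for k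
  proof -
    obtain D where D: "farset (Suc k) D" "card D = M (Suc k)" using M_ex by blast
    show ?thesis
    proof (rule stable_case[OF that(2) D(1)])
      fix D' assume "farset k D'"
      thus "card D' \<le> card D" using M_ge D(2) that(1) by metis
    qed
  qed
  have allc: "\<exists>P. ?G P" if M3: "M 3 = 1"
  proof (rule all_close_case)
    fix x y assume xy: "x \<in> V" "y \<in> V"
    show "y \<in> A 4 x"
    proof (rule ccontr)
      assume nf: "y \<notin> A 4 x"
      hence ne: "x \<noteq> y" using A_refl[OF xy(1)] by blast
      have nf2: "x \<notin> A 4 y" using nf A_sym[OF xy] by blast
      have "farset 3 {x, y}" unfolding farset_def using xy nf nf2 by (auto simp: numeral_eq_Suc)
      hence "card {x, y} \<le> M 3" by (rule M_ge)
      thus False using ne M3 by simp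
    qed
  qed
  show ?thesis
  proof (cases "M 1 = M 0")
    case True thus ?thesis using stable[of 0] by simp
  next
    case F1: False
    show ?thesis
    proof (cases "M 2 = M 1")
      case True thus ?thesis using stable[of 1] by (simp add: numeral_eq_Suc)
    next
      case F2: False
      show ?thesis
      proof (cases "M 3 = M 2")
        case True thus ?thesis using stable[of 2] by (simp add: numeral_eq_Suc)
      next
        case F3: False
        have "M 1 \<le> M 0" "M 2 \<le> M 1" "M 3 \<le> M 2" using M_dec[of 0] M_dec[of 1] M_dec[of 2]
          by (simp_all add: numeral_eq_Suc)
        hence "M 3 = 1" using F1 F2 F3 M_le4[of 0] M_ge1[of 3] by linarith
        thus ?thesis by (rule allc)
      qed
    qed
  qed
qed
end



lemma theta_pos: "0 < b \<Longrightarrow> 0 < theta b"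
  unfolding theta_def by simp

lemma bb_pos_gen: "0 < b \<Longrightarrow> 0 < a \<Longrightarrow> 0 < bb b a j"
proof (induction j)
  case 0 thus ?case by simp
next
  case (Suc j)
  have "0 < theta b ^ 16" using theta_pos[OF Suc.prems(1)] by simp
  thus ?case using Suc by simp
qed

lemma closed_mono: "closed_set V E c e U \<Longrightarrow> e' \<le> e \<Longrightarrow> closed_set V E c e' U"
  unfolding closed_set_def by (meson close_mono)

lemma ge_div: "0 < x \<Longrightarrow> c / x \<le> r \<Longrightarrow> c \<le> r * (x::real)"
  using pos_divide_le_eq[of x c r] by simp

theorem lemma5p8:
  shows "\<exists>\<gamma>0::real. \<gamma>0 > 0 \<and>
    (\<forall>\<epsilon> \<gamma>::real. 0 < \<epsilon> \<and> \<epsilon> \<le> \<gamma>0 \<and> 0 < \<gamma> \<and> \<gamma> \<le> \<gamma>0 \<longrightarrow>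
      (\<exists>\<eta>0::real. \<eta>0 > 0 \<and>
        (\<forall>\<eta>::real. 0 < \<eta> \<and> \<eta> \<le> \<eta>0 \<longrightarrow>
          (\<exists>n0::nat. \<forall>n\<ge>n0. \<forall>(V::nat set) (E::nat set set).
             is_3graph V E \<and> card V = n \<and>
             (\<forall>v\<in>V. real (card (closeN V E 1 (\<gamma> * \<epsilon>) v)) \<ge> (1/4 - 3 * \<gamma>) * real n)
             \<longrightarrow> (\<exists>P. partition_on V P \<and> card P \<le> 4 \<and>
                   (\<forall>U\<in>P. closed_set V E 16 \<eta> U \<and> real (card U) \<ge> (1/4 - 4 * \<gamma>) * real n))))))"
proof (rule exI[of _ "1/100"], rule conjI)
  show "(0::real) < 1/100" by simp
next
  show "\<forall>\<epsilon> \<gamma>::real. 0 < \<epsilon> \<and> \<epsilon> \<le> 1/100 \<and> 0 < \<gamma> \<and> \<gamma> \<le> 1/100 \<longrightarrow>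
      (\<exists>\<eta>0::real. \<eta>0 > 0 \<and>
        (\<forall>\<eta>::real. 0 < \<eta> \<and> \<eta> \<le> \<eta>0 \<longrightarrow>
          (\<exists>n0::nat. \<forall>n\<ge>n0. \<forall>(V::nat set) (E::nat set set).
             is_3graph V E \<and> card V = n \<and>
             (\<forall>v\<in>V. real (card (closeN V E 1 (\<gamma> * \<epsilon>) v)) \<ge> (1/4 - 3 * \<gamma>) * real n)
             \<longrightarrow> (\<exists>P. partition_on V P \<and> card P \<le> 4 \<and>
                   (\<forall>U\<in>P. closed_set V E 16 \<eta> U \<and> real (card U) \<ge> (1/4 - 4 * \<gamma>) * real n)))))"
  proof (intro allI impI)
  fix \<epsilon> \<gamma> :: real
  assume h: "0 < \<epsilon> \<and> \<epsilon> \<le> 1/100 \<and> 0 < \<gamma> \<and> \<gamma> \<le> 1/100"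
  define \<beta> where "\<beta> = \<gamma> * \<epsilon>"
  define \<alpha> where "\<alpha> = \<gamma> / 100"
  have \<beta>pos: "0 < \<beta>" "\<beta> \<le> 1" unfolding \<beta>_def using h by (auto intro: mult_le_one)
  have \<alpha>pos: "0 < \<alpha>" unfolding \<alpha>_def using h by simp
  have bbp: "0 < bb \<beta> \<alpha> j" for j using bb_pos_gen[OF \<beta>pos(1) \<alpha>pos] .
  have thp: "0 < theta \<beta>" using \<beta>pos(1) by (rule theta_pos)
  have cBp: "0 < cB \<beta> \<alpha>" unfolding cB_def using \<beta>pos \<alpha>pos bbp by simp
  have cCp: "0 < cC \<beta> \<alpha>" unfolding cC_def using \<beta>pos \<alpha>pos cBp by simp
  show "\<exists>\<eta>0::real. \<eta>0 > 0 \<and>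
        (\<forall>\<eta>::real. 0 < \<eta> \<and> \<eta> \<le> \<eta>0 \<longrightarrow>
          (\<exists>n0::nat. \<forall>n\<ge>n0. \<forall>(V::nat set) (E::nat set set).
             is_3graph V E \<and> card V = n \<and>
             (\<forall>v\<in>V. real (card (closeN V E 1 (\<gamma> * \<epsilon>) v)) \<ge> (1/4 - 3 * \<gamma>) * real n)
             \<longrightarrow> (\<exists>P. partition_on V P \<and> card P \<le> 4 \<and>
                   (\<forall>U\<in>P. closed_set V E 16 \<eta> U \<and> real (card U) \<ge> (1/4 - 4 * \<gamma>) * real n))))"
  proof (rule exI[of _ "cC \<beta> \<alpha> * theta \<beta> ^ 16"], rule conjI)
    show "0 < cC \<beta> \<alpha> * theta \<beta> ^ 16" using cCp thp by simp
  next
   show "\<forall>\<eta>::real. 0 < \<eta> \<and> \<eta> \<le> cC \<beta> \<alpha> * theta \<beta> ^ 16 \<longrightarrow>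
          (\<exists>n0::nat. \<forall>n\<ge>n0. \<forall>(V::nat set) (E::nat set set).
             is_3graph V E \<and> card V = n \<and>
             (\<forall>v\<in>V. real (card (closeN V E 1 (\<gamma> * \<epsilon>) v)) \<ge> (1/4 - 3 * \<gamma>) * real n)
             \<longrightarrow> (\<exists>P. partition_on V P \<and> card P \<le> 4 \<and>
                   (\<forall>U\<in>P. closed_set V E 16 \<eta> U \<and> real (card U) \<ge> (1/4 - 4 * \<gamma>) * real n)))"
   proof (intro allI impI)
    fix \<eta> :: real assume \<eta>: "0 < \<eta> \<and> \<eta> \<le> cC \<beta> \<alpha> * theta \<beta> ^ 16"
    define t1 where "t1 = 8320 / \<beta>"
    define t2 where "t2 = (\<Sum>j<4. 6 / (bb \<beta> \<alpha> j * bb \<beta> \<alpha> j))"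
    define t3 where "t3 = 40 / \<alpha>"
    define t4 where "t4 = 6 / (\<beta> * bb \<beta> \<alpha> 4)"
    define t5 where "t5 = 6 / (\<beta> * cB \<beta> \<alpha>)"
    define R where "R = t1 + t2 + t3 + t4 + t5"
    have p4: "0 < \<beta> * bb \<beta> \<alpha> 4" using \<beta>pos(1) bbp[of 4] by (rule mult_pos_pos)
    have p5: "0 < \<beta> * cB \<beta> \<alpha>" using \<beta>pos(1) cBp by (rule mult_pos_pos)
    have tp: "0 \<le> t1" "0 \<le> t2" "0 \<le> t3" "0 \<le> t4" "0 \<le> t5"
    proof -
      show "0 \<le> t1" unfolding t1_def using \<beta>pos by simp
      show "0 \<le> t2" unfolding t2_def by (intro sum_nonneg) simp
      show "0 \<le> t3" unfolding t3_def using \<alpha>pos by simp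
      show "0 \<le> t4" unfolding t4_def using p4 by simp
      show "0 \<le> t5" unfolding t5_def using p5 by simp
    qed
    show "\<exists>n0::nat. \<forall>n\<ge>n0. \<forall>(V::nat set) (E::nat set set).
             is_3graph V E \<and> card V = n \<and>
             (\<forall>v\<in>V. real (card (closeN V E 1 (\<gamma> * \<epsilon>) v)) \<ge> (1/4 - 3 * \<gamma>) * real n)
             \<longrightarrow> (\<exists>P. partition_on V P \<and> card P \<le> 4 \<and>
                   (\<forall>U\<in>P. closed_set V E 16 \<eta> U \<and> real (card U) \<ge> (1/4 - 4 * \<gamma>) * real n))"
    proof (rule exI[of _ "nat \<lceil>R\<rceil>"], intro allI impI)
      fix n :: nat and V :: "nat set" and E :: "nat set set"
      assume n: "nat \<lceil>R\<rceil> \<le> n"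
      assume H: "is_3graph V E \<and> card V = n \<and>
             (\<forall>v\<in>V. real (card (closeN V E 1 (\<gamma> * \<epsilon>) v)) \<ge> (1/4 - 3 * \<gamma>) * real n)"
      have Rn: "R \<le> real n" using n by linarith
      have finV: "finite V" using H unfolding is_3graph_def by blast
      have cV: "card V = n" using H by blast
      have n1: "t1 \<le> real n" "t2 \<le> real n" "t3 \<le> real n" "t4 \<le> real n" "t5 \<le> real n"
        using Rn tp unfolding R_def by linarith+
      have N2: "real (card V) * bb \<beta> \<alpha> j * bb \<beta> \<alpha> j \<ge> 6" if j: "j < 4" for j
      proof -
        have "6 / (bb \<beta> \<alpha> j * bb \<beta> \<alpha> j) \<le> t2" unfolding t2_def
          using j bbp by (intro member_le_sum) auto
        hence "6 / (bb \<beta> \<alpha> j * bb \<beta> \<alpha> j) \<le> real n" using n1 by linarith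
        hence "6 \<le> real n * (bb \<beta> \<alpha> j * bb \<beta> \<alpha> j)" using bbp by (intro ge_div) auto
        thus ?thesis using cV by (simp add: mult.assoc)
      qed
      interpret Hset V E \<beta> \<alpha> \<gamma>
      proof
        show "finite V" by (rule finV)
        show "0 < \<beta>" "\<beta> \<le> 1" by (rule \<beta>pos)+
        show "0 < \<gamma>" "\<gamma> \<le> 1/100" using h by auto
        show "\<alpha> = \<gamma> / 100" by (rule \<alpha>_def)
        show "\<And>v. v \<in> V \<Longrightarrow> real (card (closeN V E 1 \<beta> v)) \<ge> (1/4 - 3*\<gamma>) * real (card V)"
          using H unfolding \<beta>_def by auto
        show "real (card V) * (\<beta>/64) \<ge> 130"
        proof -
          have "8320 / \<beta> \<le> real n" using n1(1) unfolding t1_def .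
          hence "8320 \<le> real n * \<beta>" using \<beta>pos by (intro ge_div) auto
          thus ?thesis using cV by simp
        qed
        show "\<And>j. j < 4 \<Longrightarrow> real (card V) * bb \<beta> \<alpha> j * bb \<beta> \<alpha> j \<ge> 6" by (rule N2)
        show "real (card V) * \<alpha> \<ge> 40"
          using ge_div[OF \<alpha>pos, of 40 "real n"] n1(3) cV unfolding t3_def by simp
        show "real (card V) * \<beta> * bb \<beta> \<alpha> 4 \<ge> 6"
          using ge_div[of "\<beta> * bb \<beta> \<alpha> 4" 6 "real n"] n1(4) cV \<beta>pos bbp unfolding t4_def
          by (simp add: mult.assoc)
        show "real (card V) * \<beta> * cB \<beta> \<alpha> \<ge> 6"
          using ge_div[of "\<beta> * cB \<beta> \<alpha>" 6 "real n"] n1(5) cV \<beta>pos cBp unfolding t5_def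
          by (simp add: mult.assoc)
      qed
      obtain P where P: "partition_on V P" "card P \<le> 4"
        "\<forall>U\<in>P. closed_set V E 16 eta0 U \<and> real (card U) \<ge> (1/4 - 4*\<gamma>) * real (card V)"
        using main_part by blast
      show "\<exists>P. partition_on V P \<and> card P \<le> 4 \<and>
                   (\<forall>U\<in>P. closed_set V E 16 \<eta> U \<and> real (card U) \<ge> (1/4 - 4 * \<gamma>) * real n)"
      proof (intro exI[of _ P] conjI ballI)
        show "partition_on V P" "card P \<le> 4" using P by auto
        fix U assume U: "U \<in> P"
        show "closed_set V E 16 \<eta> U" using P(3) U \<eta> by (blast intro: closed_mono)
        show "real (card U) \<ge> (1/4 - 4 * \<gamma>) * real n" using P(3) U cV by auto
      qed
    qed
   qed
  qed
  qed
qed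


end
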